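(* Let $0<\lambda<\mu$. Then the decoherence-free subalgebra \[ \mathcal N(\mathcal T)=\{x\in\mathcal B(\mathsf h):\ \mathcal T_t(x^*x)=\mathcal T_t(x^* )\mathcal T_t(x),\ \mathcal T_t(xx^* )=\mathcal T_t(x)\mathcal T_t(x^* )\ \ \forall t\ge0\} \] and the fixed point algebra $\mathcal F(\mathcal T)=\{x\in\mathcal B(\mathsf h):\mathcal T_t(x)=x\ \forall t\ge0\}$ are trivial, i.e. both equal $\mathbb C\mathbb 1$.
   Context: Let $\mathsf h=\ell^2(\mathbb N)$ with canonical orthonormal basis $(e_n)_{n\ge0}$ and let $N$ be the number operator, $Ne_n=ne_n$. Fix $r>0$ and set $\omega_n=n(n+r-1)$ for $n\ge0$. On $\mathrm{Dom}(N)=\{u=\sum_n u_ne_n:\sum_n n^2|u_n|^2<\infty\}$ define $Be_n=\omega_n^{1/2}e_{n-1}$ for $n\ge1$, $Be_0=0$, and $B^+e_n=\omega_{n+1}^{1/2}e_{n+1}$. Fix real numbers $\lambda,\mu>0$ and $\zeta^+,\zeta^-$. Let $G$ be the operator with domain $\mathrm{Dom}(N^2)$ given by $Ge_n=-\big((\tfrac{\lambda^2}{2}+i\zeta^+)\omega_{n+1}+(\tfrac{\mu^2}{2}+i\zeta^-)\omega_n\big)e_n$, generating the contraction semigroup $P_t=e^{tG}$, and let $L_1=\mu B$, $L_2=\lambda B^+$. The quantum Markov semigroup $\mathcal T=(\mathcal T_t)_{t\ge0}$ on $\mathcal B(\mathsf h)$ is the minimal quantum dynamical semigroup associated with $G,L_1,L_2$,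 i.e. the minimal solution of $\langle v,\mathcal T_t(x)u\rangle=\langle P_tv,xP_tu\rangle+\sum_{\ell=1}^2\int_0^t\langle L_\ell P_{t-s}v,\mathcal T_s(x)L_\ell P_{t-s}u\rangle\,ds$ for $u,v\in\mathrm{Dom}(G)$, $x\in\mathcal B(\mathsf h)$; its formal generator is $\mathcal L(x)=-\frac{\lambda^2}{2}(BB^+x-2BxB^++xBB^+)-\frac{\mu^2}{2}(B^+Bx-2B^+xB+xB^+B)+i[\zeta^+BB^++\zeta^-B^+B,x]$. It is identity preserving when $\lambda\le\mu$. *)

theory Defs
  imports "HOL-Analysis.Analysis"
begin

text \<open>The Hilbert space h = l2(N) is modelled by square-summable sequences
  nat \<Rightarrow> complex (coordinates w.r.t. the canonical basis e_n).
  A bounded operator x in B(h) is represented faithfully and canonically by its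
  matrix (x i j = <e_i, x e_j>), subject to the predicate bdd_op.\<close>

type_synonym vec = "nat \<Rightarrow> complex"
type_synonym mat = "nat \<Rightarrow> nat \<Rightarrow> complex"

definition l2 :: "vec \<Rightarrow> bool" where
  "l2 u \<longleftrightarrow> summable (\<lambda>n. (cmod (u n))^2)"

definition l2norm2 :: "vec \<Rightarrow> real" where
  "l2norm2 u = (\<Sum>n. (cmod (u n))^2)"

definition ip :: "vec \<Rightarrow> vec \<Rightarrow> complex" where
  "ip v u = (\<Sum>n. cnj (v n) * u n)"

definition app :: "mat \<Rightarrow> vec \<Rightarrow> vec" where
  "app M u = (\<lambda>i. \<Sum>j. M i j * u j)"

definition bdd_op :: "mat \<Rightarrow> bool" where
  "bdd_op M \<longleftrightarrow> (\<exists>C. \<forall>u. l2 u \<longrightarrow>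
      (\<forall>i. summable (\<lambda>j. M i j * u j)) \<and> l2 (app M u) \<and> l2norm2 (app M u) \<le> C * l2norm2 u)"

definition mmult :: "mat \<Rightarrow> mat \<Rightarrow> mat" where
  "mmult A B = (\<lambda>i j. \<Sum>k. A i k * B k j)"

definition adj :: "mat \<Rightarrow> mat" where
  "adj A = (\<lambda>i j. cnj (A j i))"

definition idm :: mat where
  "idm = (\<lambda>i j. if i = j then 1 else 0)"

definition positive_op :: "mat \<Rightarrow> bool" where
  "positive_op M \<longleftrightarrow> bdd_op M \<and>
     (\<forall>u. l2 u \<longrightarrow> Im (ip u (app M u)) = 0 \<and> 0 \<le> Re (ip u (app M u)))"

definition op_le :: "mat \<Rightarrow> mat \<Rightarrow> bool" where
  "op_le A B \<longleftrightarrow> positive_op (\<lambda>i j. B i j - A i j)"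

definition omega :: "real \<Rightarrow> nat \<Rightarrow> real" where
  "omega r n = real n * (real n + r - 1)"

text \<open>B e_n = omega_n^(1/2) e_(n-1), i.e. (B u)_n = omega_(n+1)^(1/2) u_(n+1).\<close>
definition annB :: "real \<Rightarrow> vec \<Rightarrow> vec" where
  "annB r u = (\<lambda>n. complex_of_real (sqrt (omega r (Suc n))) * u (Suc n))"

text \<open>B^+ e_n = omega_(n+1)^(1/2) e_(n+1), i.e. (B^+ u)_n = omega_n^(1/2) u_(n-1), (B^+ u)_0 = 0.\<close>
definition creB :: "real \<Rightarrow> vec \<Rightarrow> vec" where
  "creB r u = (\<lambda>n. case n of 0 \<Rightarrow> 0 | Suc m \<Rightarrow> complex_of_real (sqrt (omega r n)) * u m)"

text \<open>Eigenvalues of the diagonal operator G.\<close>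
definition gdiag :: "real \<Rightarrow> real \<Rightarrow> real \<Rightarrow> real \<Rightarrow> real \<Rightarrow> nat \<Rightarrow> complex" where
  "gdiag r lam mu zp zm n =
     - ((complex_of_real (lam^2 / 2) + \<i> * complex_of_real zp) * complex_of_real (omega r (Suc n))
      + (complex_of_real (mu^2 / 2) + \<i> * complex_of_real zm) * complex_of_real (omega r n))"

text \<open>P_t = e^(tG), diagonal with entries exp(t g_n).\<close>
definition Pt :: "real \<Rightarrow> real \<Rightarrow> real \<Rightarrow> real \<Rightarrow> real \<Rightarrow> real \<Rightarrow> vec \<Rightarrow> vec" where
  "Pt r lam mu zp zm t u = (\<lambda>n. exp (complex_of_real t * gdiag r lam mu zp zm n) * u n)"

text \<open>Dom(G) = Dom(N^2).\<close>
definition domG :: "vec \<Rightarrow> bool" where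
  "domG u \<longleftrightarrow> summable (\<lambda>n. (real n ^ 2 * cmod (u n))^2)"

definition L1 :: "real \<Rightarrow> real \<Rightarrow> vec \<Rightarrow> vec" where
  "L1 r mu u = (\<lambda>n. complex_of_real mu * annB r u n)"

definition L2 :: "real \<Rightarrow> real \<Rightarrow> vec \<Rightarrow> vec" where
  "L2 r lam u = (\<lambda>n. complex_of_real lam * creB r u n)"

definition qds_eq :: "real \<Rightarrow> real \<Rightarrow> real \<Rightarrow> real \<Rightarrow> real \<Rightarrow> (real \<Rightarrow> mat \<Rightarrow> mat) \<Rightarrow> bool" where
  "qds_eq r lam mu zp zm S \<longleftrightarrow>
     (\<forall>t x u v. 0 \<le> t \<longrightarrow> bdd_op x \<longrightarrow> domG u \<longrightarrow> domG v \<longrightarrow>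
        ((\<lambda>s. ip (L1 r mu (Pt r lam mu zp zm (t - s) v)) (app (S s x) (L1 r mu (Pt r lam mu zp zm (t - s) u)))
            + ip (L2 r lam (Pt r lam mu zp zm (t - s) v)) (app (S s x) (L2 r lam (Pt r lam mu zp zm (t - s) u))))
         has_integral
           (ip v (app (S t x) u) - ip (Pt r lam mu zp zm t v) (app x (Pt r lam mu zp zm t u)))) {0..t})"

definition qds_solution :: "real \<Rightarrow> real \<Rightarrow> real \<Rightarrow> real \<Rightarrow> real \<Rightarrow> (real \<Rightarrow> mat \<Rightarrow> mat) \<Rightarrow> bool" where
  "qds_solution r lam mu zp zm S \<longleftrightarrow>
     (\<forall>t x. 0 \<le> t \<longrightarrow> bdd_op x \<longrightarrow> bdd_op (S t x)) \<and>
     (\<forall>t x. 0 \<le> t \<longrightarrow> positive_op x \<longrightarrow> positive_op (S t x)) \<and>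
     qds_eq r lam mu zp zm S"

definition minimal_qds :: "real \<Rightarrow> real \<Rightarrow> real \<Rightarrow> real \<Rightarrow> real \<Rightarrow> (real \<Rightarrow> mat \<Rightarrow> mat) \<Rightarrow> bool" where
  "minimal_qds r lam mu zp zm T \<longleftrightarrow>
     qds_solution r lam mu zp zm T \<and>
     (\<forall>t a b x y. 0 \<le> t \<longrightarrow> bdd_op x \<longrightarrow> bdd_op y \<longrightarrow>
        T t (\<lambda>i j. a * x i j + b * y i j) = (\<lambda>i j. a * T t x i j + b * T t y i j)) \<and>
     (\<forall>S. qds_solution r lam mu zp zm S \<longrightarrow>
        (\<forall>t x. 0 \<le> t \<longrightarrow> positive_op x \<longrightarrow> op_le (T t x) (S t x)))"

definition dec_free :: "(real \<Rightarrow> mat \<Rightarrow> mat) \<Rightarrow> mat set" where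
  "dec_free T = {x. bdd_op x \<and> (\<forall>t\<ge>0.
      T t (mmult (adj x) x) = mmult (T t (adj x)) (T t x) \<and>
      T t (mmult x (adj x)) = mmult (T t x) (T t (adj x)))}"

definition fixed_pts :: "(real \<Rightarrow> mat \<Rightarrow> mat) \<Rightarrow> mat set" where
  "fixed_pts T = {x. bdd_op x \<and> (\<forall>t\<ge>0. T t x = x)}"

definition scalars :: "mat set" where
  "scalars = {x. \<exists>c::complex. x = (\<lambda>i j. c * idm i j)}"

end

theory Submission
  imports Defs
begin

definition sv :: "complex \<Rightarrow> nat \<Rightarrow> vec" where
  "sv c j = (\<lambda>n. if n = j then c else 0)"

definition tr :: "nat \<Rightarrow> vec \<Rightarrow> vec" where
  "tr N u = (\<lambda>n. if n < N then u n else 0)"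

lemma sums_sv: "(\<lambda>n. f n * sv c j n) sums (f j * c)"
proof -
  have "(\<lambda>n. f n * sv c j n) = (\<lambda>n. if n = j then f j * c else 0)"
    by (auto simp: sv_def)
  then show ?thesis using sums_single[of j "\<lambda>_. f j * c"] by simp
qed

lemma sums_sv': "(\<lambda>n. sv c j n * f n) sums (c * f j)"
  using sums_sv[of f c j] by (simp add: mult.commute)

lemma l2_sv: "l2 (sv c j)"
proof -
  have "(\<lambda>n. (cmod (sv c j n))^2) = (\<lambda>n. if n = j then (cmod c)^2 else 0)"
    by (auto simp: sv_def)
  then show ?thesis unfolding l2_def using sums_single[of j "\<lambda>_. (cmod c)^2"]
    by (simp add: sums_summable)
qed

lemma l2norm2_sv: "l2norm2 (sv c j) = (cmod c)^2"
proof -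
  have "(\<lambda>n. (cmod (sv c j n))^2) = (\<lambda>n. if n = j then (cmod c)^2 else 0)"
    by (auto simp: sv_def)
  then show ?thesis unfolding l2norm2_def using sums_single[of j "\<lambda>_. (cmod c)^2"]
    by (simp add: sums_iff)
qed

lemma domG_sv: "domG (sv c j)"
proof -
  have "(\<lambda>n. (real n ^ 2 * cmod (sv c j n))^2) = (\<lambda>n. if n = j then (real j ^ 2 * cmod c)^2 else 0)"
    by (auto simp: sv_def)
  then show ?thesis unfolding domG_def using sums_single[of j "\<lambda>_. (real j ^ 2 * cmod c)^2"]
    by (simp add: sums_summable)
qed

lemma app_sv: "app M (sv c j) = (\<lambda>i. M i j * c)"
  unfolding app_def using sums_sv[of "M _" c j] by (auto simp: sums_iff)

lemma ip_sv: "ip (sv c i) w = cnj c * w i"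
proof -
  have "(\<lambda>n. cnj (sv c i n) * w n) sums (cnj c * w i)"
  proof -
    have "(\<lambda>n. cnj (sv c i n) * w n) = (\<lambda>n. if n = i then cnj c * w i else 0)"
      by (auto simp: sv_def)
    then show ?thesis using sums_single[of i "\<lambda>_. cnj c * w i"] by simp
  qed
  then show ?thesis unfolding ip_def by (simp add: sums_iff)
qed

lemma l2norm2_nonneg: "l2 u \<Longrightarrow> 0 \<le> l2norm2 u"
  unfolding l2_def l2norm2_def by (simp add: suminf_nonneg)

lemma bdd_opE:
  assumes "bdd_op M"
  obtains C where "0 \<le> C" "\<And>u. l2 u \<Longrightarrow> (\<forall>i. summable (\<lambda>j. M i j * u j)) \<and> l2 (app M u) \<and> l2norm2 (app M u) \<le> C * l2norm2 u"
proof -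
  obtain C where C: "\<forall>u. l2 u \<longrightarrow> (\<forall>i. summable (\<lambda>j. M i j * u j)) \<and> l2 (app M u) \<and> l2norm2 (app M u) \<le> C * l2norm2 u"
    using assms unfolding bdd_op_def by blast
  have "0 \<le> l2norm2 (app M (sv 1 0))" using C l2_sv l2norm2_nonneg by blast
  also have "\<dots> \<le> C * l2norm2 (sv 1 0)" using C l2_sv by blast
  finally have "0 \<le> C" by (simp add: l2norm2_sv)
  with C that show ?thesis by blast
qed

lemma bdd_col_l2: assumes "bdd_op M" shows "l2 (\<lambda>i. M i j)"
proof -
  obtain C where C: "0 \<le> C" "\<And>u. l2 u \<Longrightarrow> (\<forall>i. summable (\<lambda>j. M i j * u j)) \<and> l2 (app M u) \<and> l2norm2 (app M u) \<le> C * l2norm2 u"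
    by (rule bdd_opE[OF assms]) blast
  have "l2 (app M (sv 1 j))" using C(2)[OF l2_sv] by blast
  then show ?thesis by (simp add: app_sv)
qed

lemma l2_le_norm: "l2 u \<Longrightarrow> (cmod (u n))^2 \<le> l2norm2 u"
  unfolding l2_def l2norm2_def
  using sum_le_suminf[of "\<lambda>n. (cmod (u n))^2" "{n}"] by auto

lemma bdd_entry: 
  assumes "bdd_op M" obtains C where "0 \<le> C" "\<And>i j. cmod (M i j) \<le> C"
proof -
  obtain C where C: "0 \<le> C" "\<And>u. l2 u \<Longrightarrow> (\<forall>i. summable (\<lambda>j. M i j * u j)) \<and> l2 (app M u) \<and> l2norm2 (app M u) \<le> C * l2norm2 u"
    by (rule bdd_opE[OF assms]) blast
  have "(cmod (M i j))^2 \<le> C" for i j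
  proof -
    have "(cmod (M i j))^2 \<le> l2norm2 (\<lambda>i. M i j)"
      using l2_le_norm[OF bdd_col_l2[OF assms]] by auto
    also have "\<dots> = l2norm2 (app M (sv 1 j))" by (simp add: app_sv)
    also have "\<dots> \<le> C" using C(2)[OF l2_sv, of 1 j] by (simp add: l2norm2_sv)
    finally show ?thesis .
  qed
  then have "cmod (M i j) \<le> sqrt C" for i j
    by (metis norm_ge_zero real_le_rsqrt)
  then show ?thesis using that[of "sqrt C"] C by auto
qed


lemma cmod_sum_sq: "(cmod (x + y))^2 \<le> 2 * (cmod x)^2 + 2 * (cmod y)^2"
proof -
  have "cmod (x + y) \<le> cmod x + cmod y" by (rule norm_triangle_ineq)
  then have "(cmod (x + y))^2 \<le> (cmod x + cmod y)^2" by (simp add: power_mono)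
  also have "\<dots> \<le> 2 * (cmod x)^2 + 2 * (cmod y)^2"
  proof -
    have "0 \<le> (cmod x - cmod y)^2" by simp
    then show ?thesis by (simp add: power2_sum power2_diff)
  qed
  finally show ?thesis .
qed

lemma cmod_prod_le: "cmod (a * b) \<le> ((cmod a)^2 + (cmod b)^2) / 2"
proof -
  have "0 \<le> (cmod a - cmod b)^2" by simp
  then show ?thesis by (simp add: norm_mult power2_diff)
qed

lemma ip_summable_abs: assumes "l2 u" "l2 v"
  shows "summable (\<lambda>n. cmod (cnj (v n) * u n))"
proof (rule summable_comparison_test[where g="\<lambda>n. ((cmod (v n))^2 + (cmod (u n))^2) / 2"])
  show "\<exists>N. \<forall>n\<ge>N. norm (cmod (cnj (v n) * u n)) \<le> ((cmod (v n))\<^sup>2 + (cmod (u n))\<^sup>2) / 2"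
    using cmod_prod_le[of "cnj (v _)" "u _"] by auto
  show "summable (\<lambda>n. ((cmod (v n))\<^sup>2 + (cmod (u n))\<^sup>2) / 2)"
    using assms unfolding l2_def by (intro summable_divide summable_add)
qed

lemma ip_summable: "l2 u \<Longrightarrow> l2 v \<Longrightarrow> summable (\<lambda>n. cnj (v n) * u n)"
  by (rule summable_norm_cancel) (rule ip_summable_abs)

lemma ip_sums: "l2 u \<Longrightarrow> l2 v \<Longrightarrow> (\<lambda>n. cnj (v n) * u n) sums ip v u"
  unfolding ip_def by (rule summable_sums) (rule ip_summable)

lemma ip_CS: assumes "l2 u" "l2 v"
  shows "(cmod (ip v u))^2 \<le> l2norm2 v * l2norm2 u"
proof -
  let ?a = "\<lambda>n. cmod (v n)" and ?b = "\<lambda>n. cmod (u n)"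
  have sv': "summable (\<lambda>n. (?a n)^2)" "summable (\<lambda>n. (?b n)^2)" using assms unfolding l2_def by auto
  have Lv: "0 \<le> l2norm2 v" "0 \<le> l2norm2 u" using assms l2norm2_nonneg by auto
  have fin: "(\<Sum>n<N. ?a n * ?b n) \<le> sqrt (l2norm2 v * l2norm2 u)" for N
  proof -
    have "(\<Sum>n<N. ?a n * ?b n)^2 \<le> (\<Sum>n<N. (?a n)^2) * (\<Sum>n<N. (?b n)^2)"
      by (rule Cauchy_Schwarz_ineq_sum)
    also have "\<dots> \<le> l2norm2 v * l2norm2 u"
      unfolding l2norm2_def
      by (intro mult_mono sum_le_suminf sv') (auto intro: sum_nonneg suminf_nonneg sv')
    finally show ?thesis by (simp add: real_le_rsqrt)
  qed
  have sab: "summable (\<lambda>n. ?a n * ?b n)"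
    using ip_summable_abs[OF assms] by (simp add: norm_mult)
  have "cmod (ip v u) \<le> (\<Sum>n. cmod (cnj (v n) * u n))"
    unfolding ip_def using ip_summable_abs[OF assms] by (rule summable_norm)
  also have "\<dots> = (\<Sum>n. ?a n * ?b n)" by (simp add: norm_mult)
  also have "\<dots> \<le> sqrt (l2norm2 v * l2norm2 u)"
    by (rule suminf_le_const[OF sab fin])
  finally have "cmod (ip v u) \<le> sqrt (l2norm2 v * l2norm2 u)" .
  then have "(cmod (ip v u))^2 \<le> (sqrt (l2norm2 v * l2norm2 u))^2"
    by (simp add: power_mono)
  also have "\<dots> = l2norm2 v * l2norm2 u" using Lv by simp
  finally show ?thesis .
qed

lemma l2_lin: assumes "l2 u" "l2 w"
  shows "l2 (\<lambda>n. a * u n + b * w n)"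
    and "l2norm2 (\<lambda>n. a * u n + b * w n) \<le> 2 * (cmod a)^2 * l2norm2 u + 2 * (cmod b)^2 * l2norm2 w"
proof -
  have le: "(cmod (a * u n + b * w n))^2 \<le> 2 * (cmod a)^2 * (cmod (u n))^2 + 2 * (cmod b)^2 * (cmod (w n))^2" for n
    using cmod_sum_sq[of "a * u n" "b * w n"] by (simp add: norm_mult power_mult_distrib)
  have s2: "summable (\<lambda>n. 2 * (cmod a)^2 * (cmod (u n))^2 + 2 * (cmod b)^2 * (cmod (w n))^2)"
    using assms unfolding l2_def by (intro summable_add summable_mult)
  show l: "l2 (\<lambda>n. a * u n + b * w n)" unfolding l2_def
    by (rule summable_comparison_test[OF _ s2]) (use le in auto)
  have "l2norm2 (\<lambda>n. a * u n + b * w n) \<le> (\<Sum>n. 2 * (cmod a)^2 * (cmod (u n))^2 + 2 * (cmod b)^2 * (cmod (w n))^2)"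
    unfolding l2norm2_def using l le s2 unfolding l2_def by (intro suminf_le) auto
  also have "\<dots> = 2 * (cmod a)^2 * l2norm2 u + 2 * (cmod b)^2 * l2norm2 w"
  proof -
    have "(\<lambda>n. 2 * (cmod a)^2 * (cmod (u n))^2 + 2 * (cmod b)^2 * (cmod (w n))^2) sums (2 * (cmod a)^2 * l2norm2 u + 2 * (cmod b)^2 * l2norm2 w)"
      using assms unfolding l2_def l2norm2_def by (intro sums_add sums_mult summable_sums)
    then show ?thesis by (simp add: sums_iff)
  qed
  finally show "l2norm2 (\<lambda>n. a * u n + b * w n) \<le> 2 * (cmod a)^2 * l2norm2 u + 2 * (cmod b)^2 * l2norm2 w" .
qed

lemma l2_diff: "l2 u \<Longrightarrow> l2 w \<Longrightarrow> l2 (\<lambda>n. u n - w n)"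
  using l2_lin(1)[of u w 1 "-1"] by simp

lemma ip_diff: "l2 a \<Longrightarrow> l2 b \<Longrightarrow> l2 v \<Longrightarrow> ip v (\<lambda>n. a n - b n) = ip v a - ip v b"
proof -
  assume as: "l2 a" "l2 b" "l2 v"
  have "(\<lambda>n. cnj (v n) * a n - cnj (v n) * b n) sums (ip v a - ip v b)"
    by (intro sums_diff ip_sums as)
  then show ?thesis unfolding ip_def by (simp add: right_diff_distrib sums_iff)
qed

lemma app_lin: assumes "bdd_op M" "l2 u" "l2 w"
  shows "app M (\<lambda>n. a * u n + b * w n) = (\<lambda>i. a * app M u i + b * app M w i)"
proof -
  obtain C where C: "0 \<le> C" "\<And>u. l2 u \<Longrightarrow> (\<forall>i. summable (\<lambda>j. M i j * u j)) \<and> l2 (app M u) \<and> l2norm2 (app M u) \<le> C * l2norm2 u"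
    by (rule bdd_opE[OF assms(1)]) blast
  have su: "summable (\<lambda>j. M i j * u j)" and sw: "summable (\<lambda>j. M i j * w j)" for i
    using C(2) assms by blast+
  show ?thesis unfolding app_def
  proof
    fix i
    have "(\<lambda>j. a * (M i j * u j) + b * (M i j * w j)) sums (a * (\<Sum>j. M i j * u j) + b * (\<Sum>j. M i j * w j))"
      by (intro sums_add sums_mult summable_sums su sw)
    then show "(\<Sum>j. M i j * (a * u j + b * w j)) = a * (\<Sum>j. M i j * u j) + b * (\<Sum>j. M i j * w j)"
      by (simp add: sums_iff algebra_simps)
  qed
qed

lemma app_diff: assumes "bdd_op M" "l2 u" "l2 w"
  shows "app M (\<lambda>n. u n - w n) = (\<lambda>i. app M u i - app M w i)"
  using app_lin[OF assms, of 1 "-1"] by simp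


lemma app_tr: "app M (tr N u) = (\<lambda>i. \<Sum>k<N. M i k * u k)"
proof
  fix i
  have "(\<Sum>k. M i k * tr N u k) = (\<Sum>k<N. M i k * tr N u k)"
    by (rule suminf_finite) (auto simp: tr_def)
  also have "\<dots> = (\<Sum>k<N. M i k * u k)" by (rule sum.cong) (auto simp: tr_def)
  finally show "app M (tr N u) i = (\<Sum>k<N. M i k * u k)" unfolding app_def .
qed

lemma l2_tr: assumes "l2 u" shows "l2 (tr N u)"
  unfolding l2_def
  by (rule summable_comparison_test[OF _ assms[unfolded l2_def]]) (auto simp: tr_def)

lemma tail_tendsto: assumes "l2 u"
  shows "(\<lambda>N. l2norm2 (\<lambda>n. u n - tr N u n)) \<longlonglongrightarrow> 0"
proof -
  have su: "summable (\<lambda>n. (cmod (u n))^2)" using assms unfolding l2_def .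
  have eq: "l2norm2 (\<lambda>n. u n - tr N u n) = (\<Sum>n. (cmod (u n))^2) - (\<Sum>n<N. (cmod (u n))^2)" for N
  proof -
    have f: "(\<lambda>n. if n < N then (cmod (u n))^2 else 0) sums (\<Sum>n<N. (cmod (u n))^2)"
    proof -
      have "(\<lambda>n. if n \<in> {..<N} then (cmod (u n))^2 else 0) sums (\<Sum>n\<in>{..<N}. (cmod (u n))^2)"
        by (rule sums_If_finite_set) simp
      then show ?thesis by simp
    qed
    have "(\<lambda>n. (cmod (u n))^2 - (if n < N then (cmod (u n))^2 else 0)) sums ((\<Sum>n. (cmod (u n))^2) - (\<Sum>n<N. (cmod (u n))^2))"
      by (intro sums_diff summable_sums su f)
    moreover have "(\<lambda>n. (cmod (u n - tr N u n))^2) = (\<lambda>n. (cmod (u n))^2 - (if n < N then (cmod (u n))^2 else 0))"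
      by (auto simp: tr_def)
    ultimately show ?thesis unfolding l2norm2_def by (simp add: sums_iff)
  qed
  have "(\<lambda>N. (\<Sum>n. (cmod (u n))^2) - (\<Sum>n<N. (cmod (u n))^2)) \<longlonglongrightarrow> (\<Sum>n. (cmod (u n))^2) - (\<Sum>n. (cmod (u n))^2)"
    by (intro tendsto_diff tendsto_const summable_LIMSEQ su)
  then show ?thesis unfolding eq by simp
qed

lemma bdd_l2: "bdd_op M \<Longrightarrow> l2 u \<Longrightarrow> l2 (app M u)"
  by (erule bdd_opE) blast

lemma bdd_row_summable: "bdd_op M \<Longrightarrow> l2 u \<Longrightarrow> summable (\<lambda>j. M i j * u j)"
  by (erule bdd_opE) blast

lemma bdd_bound: "bdd_op M \<Longrightarrow> \<exists>C\<ge>0. \<forall>u. l2 u \<longrightarrow> l2norm2 (app M u) \<le> C * l2norm2 u"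
  by (erule bdd_opE) blast

lemma app_adj: "app (adj M) v j = (\<Sum>i. cnj (M i j) * v i)"
  unfolding app_def adj_def ..

lemma W_sums:
  assumes M: "bdd_op M" and u: "l2 u" and v: "l2 v"
  shows "(\<lambda>j. cnj (app (adj M) v j) * u j) sums ip v (app M u)"
proof -
  obtain C where C: "0 \<le> C" "\<And>w. l2 w \<Longrightarrow> l2norm2 (app M w) \<le> C * l2norm2 w"
    using bdd_bound[OF M] by blast
  have col: "l2 (\<lambda>i. M i k)" for k using bdd_col_l2[OF M] .
  have cs: "(\<lambda>i. cnj (v i) * M i k) sums cnj (app (adj M) v k)" for k
  proof -
    have "(\<lambda>i. cnj (v i) * M i k) sums ip v (\<lambda>i. M i k)" by (rule ip_sums[OF col v])
    moreover have "ip v (\<lambda>i. M i k) = cnj (app (adj M) v k)"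
    proof -
      have "(\<lambda>i. cnj (M i k) * v i) sums cnj (ip v (\<lambda>i. M i k))"
      proof -
        have "(\<lambda>i. cnj (cnj (v i) * M i k)) sums cnj (ip v (\<lambda>i. M i k))"
          using ip_sums[OF col v] sums_cnj[of "\<lambda>i. cnj (v i) * M i k"] by blast
        then show ?thesis by (simp add: mult.commute)
      qed
      then show ?thesis unfolding app_adj by (simp add: sums_iff)
    qed
    ultimately show ?thesis by simp
  qed
  have partial: "(\<Sum>j<N. cnj (app (adj M) v j) * u j) = ip v (app M (tr N u))" for N
  proof -
    have "(\<lambda>i. \<Sum>k<N. cnj (v i) * M i k * u k) sums (\<Sum>k<N. cnj (app (adj M) v k) * u k)"
      by (intro sums_sum sums_mult2 cs)
    moreover have "(\<lambda>i. cnj (v i) * app M (tr N u) i) = (\<lambda>i. \<Sum>k<N. cnj (v i) * M i k * u k)"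
      by (simp add: app_tr sum_distrib_left mult.assoc)
    ultimately show ?thesis unfolding ip_def by (simp add: sums_iff)
  qed
  have lim: "(\<lambda>N. ip v (app M (tr N u))) \<longlonglongrightarrow> ip v (app M u)"
  proof -
    have d: "ip v (app M u) - ip v (app M (tr N u)) = ip v (app M (\<lambda>n. u n - tr N u n))" for N
      using ip_diff[OF bdd_l2[OF M u] bdd_l2[OF M l2_tr[OF u]] v] app_diff[OF M u l2_tr[OF u]]
      by simp
    have b: "norm (ip v (app M u) - ip v (app M (tr N u))) \<le> sqrt (l2norm2 v * (C * l2norm2 (\<lambda>n. u n - tr N u n)))" for N
    proof -
      have l: "l2 (\<lambda>n. u n - tr N u n)" by (rule l2_diff[OF u l2_tr[OF u]])
      have "(cmod (ip v (app M (\<lambda>n. u n - tr N u n))))^2 \<le> l2norm2 v * l2norm2 (app M (\<lambda>n. u n - tr N u n))"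
        by (rule ip_CS[OF bdd_l2[OF M l] v])
      also have "\<dots> \<le> l2norm2 v * (C * l2norm2 (\<lambda>n. u n - tr N u n))"
        by (rule mult_left_mono[OF C(2)[OF l] l2norm2_nonneg[OF v]])
      finally show ?thesis unfolding d by (simp add: real_le_rsqrt)
    qed
    have "(\<lambda>N. sqrt (l2norm2 v * (C * l2norm2 (\<lambda>n. u n - tr N u n)))) \<longlonglongrightarrow> sqrt (l2norm2 v * (C * 0))"
      by (intro tendsto_intros tail_tendsto u)
    then have l0: "(\<lambda>N. sqrt (l2norm2 v * (C * l2norm2 (\<lambda>n. u n - tr N u n)))) \<longlonglongrightarrow> 0" by simp
    have "(\<lambda>N. ip v (app M u) - ip v (app M (tr N u))) \<longlonglongrightarrow> 0"
      by (rule Lim_null_comparison[OF always_eventually[OF allI[OF b]] l0])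
    then have "(\<lambda>N. ip v (app M u) - (ip v (app M u) - ip v (app M (tr N u)))) \<longlonglongrightarrow> ip v (app M u) - 0"
      by (intro tendsto_diff tendsto_const)
    then show ?thesis by simp
  qed
  show ?thesis unfolding sums_def partial using lim .
qed


lemma l2_tr_any: "l2 (tr N w)"
proof -
  have "(\<lambda>n. (cmod (tr N w n))^2) = (\<lambda>n. if n \<in> {..<N} then (cmod (w n))^2 else 0)"
    by (auto simp: tr_def)
  then show ?thesis unfolding l2_def using sums_If_finite_set[of "{..<N}" "\<lambda>n. (cmod (w n))^2"]
    by (simp add: sums_summable)
qed

lemma l2norm2_tr: "l2norm2 (tr N w) = (\<Sum>n<N. (cmod (w n))^2)"
proof -
  have "(\<lambda>n. (cmod (tr N w n))^2) = (\<lambda>n. if n \<in> {..<N} then (cmod (w n))^2 else 0)"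
    by (auto simp: tr_def)
  then show ?thesis unfolding l2norm2_def using sums_If_finite_set[of "{..<N}" "\<lambda>n. (cmod (w n))^2"]
    by (simp add: sums_iff)
qed

lemma cnj_mult_self: "cnj z * z = complex_of_real ((cmod z)^2)"
  by (metis complex_norm_square mult.commute)

lemma bdd_adj: assumes M: "bdd_op M" shows "bdd_op (adj M)"
proof -
  obtain C where C: "0 \<le> C" "\<And>w. l2 w \<Longrightarrow> l2norm2 (app M w) \<le> C * l2norm2 w"
    using bdd_bound[OF M] by blast
  have main: "(\<forall>i. summable (\<lambda>j. adj M i j * u j)) \<and> l2 (app (adj M) u) \<and> l2norm2 (app (adj M) u) \<le> C * l2norm2 u"
    if u: "l2 u" for u
  proof -
    have rows: "summable (\<lambda>j. adj M i j * u j)" for i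
      unfolding adj_def by (rule ip_summable[OF u bdd_col_l2[OF M]])
    define w where "w = app (adj M) u"
    have SN: "(\<Sum>n<N. (cmod (w n))^2) \<le> C * l2norm2 u" for N
    proof -
      define S where "S = (\<Sum>n<N. (cmod (w n))^2)"
      have S0: "0 \<le> S" unfolding S_def by (simp add: sum_nonneg)
      have "(\<lambda>j. cnj (w j) * tr N w j) sums ip u (app M (tr N w))"
        unfolding w_def by (rule W_sums[OF M l2_tr_any u])
      moreover have "(\<lambda>j. cnj (w j) * tr N w j) sums (\<Sum>j<N. cnj (w j) * w j)"
      proof -
        have "(\<lambda>j. if j \<in> {..<N} then cnj (w j) * w j else 0) sums (\<Sum>j\<in>{..<N}. cnj (w j) * w j)"
          by (rule sums_If_finite_set) simp
        moreover have "(\<lambda>j. cnj (w j) * tr N w j) = (\<lambda>j. if j \<in> {..<N} then cnj (w j) * w j else 0)"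
          by (auto simp: tr_def)
        ultimately show ?thesis by simp
      qed
      ultimately have "ip u (app M (tr N w)) = (\<Sum>j<N. cnj (w j) * w j)" by (simp add: sums_iff)
      also have "\<dots> = of_real S" unfolding S_def of_real_sum
        by (intro sum.cong refl) (rule cnj_mult_self)
      finally have eq: "ip u (app M (tr N w)) = of_real S" .
      have "S^2 = (cmod (ip u (app M (tr N w))))^2" using eq S0 by simp
      also have "\<dots> \<le> l2norm2 u * l2norm2 (app M (tr N w))"
        by (rule ip_CS[OF bdd_l2[OF M l2_tr_any] u])
      also have "\<dots> \<le> l2norm2 u * (C * l2norm2 (tr N w))"
        by (rule mult_left_mono[OF C(2)[OF l2_tr_any] l2norm2_nonneg[OF u]])
      also have "\<dots> = (C * l2norm2 u) * S" by (simp add: l2norm2_tr S_def)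
      finally have "S * S \<le> (C * l2norm2 u) * S" by (simp add: power2_eq_square)
      then have "S \<le> C * l2norm2 u"
        using S0 by (cases "S = 0") (auto simp: C(1) l2norm2_nonneg[OF u] intro: mult_nonneg_nonneg)
      then show ?thesis unfolding S_def .
    qed
    have sm: "summable (\<lambda>n. (cmod (w n))^2)"
      by (rule summableI_nonneg_bounded[OF _ SN]) simp
    have "l2norm2 w \<le> C * l2norm2 u" unfolding l2norm2_def[of w] by (rule suminf_le_const[OF sm SN])
    then show ?thesis using rows sm unfolding w_def l2_def by blast
  qed
  then show ?thesis unfolding bdd_op_def by blast
qed

lemma mmult_sums:
  assumes A: "bdd_op A" and B: "bdd_op B" and u: "l2 u"
  shows "(\<lambda>j. mmult A B i j * u j) sums app A (app B u) i"
proof -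
  define a where "a = (\<lambda>k. cnj (A i k))"
  have a2: "a = app (adj A) (sv 1 i)" unfolding a_def by (simp add: app_sv adj_def)
  have la: "l2 a" unfolding a2 by (rule bdd_l2[OF bdd_adj[OF A] l2_sv])
  have W: "(\<lambda>j. cnj (app (adj B) a j) * u j) sums ip a (app B u)"
    by (rule W_sums[OF B u la])
  have e1: "cnj (app (adj B) a j) = mmult A B i j" for j
  proof -
    have "(\<lambda>k. cnj (a k) * B k j) sums ip a (\<lambda>k. B k j)" by (rule ip_sums[OF bdd_col_l2[OF B] la])
    moreover have "(\<lambda>k. cnj (cnj (cnj (a k) * B k j))) sums cnj (cnj (ip a (\<lambda>k. B k j)))"
      using calculation by simp
    then have "(\<lambda>k. cnj (cnj (B k j) * a k)) sums cnj (cnj (ip a (\<lambda>k. B k j)))"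
      by (simp add: mult.commute)
    then have "(\<lambda>k. cnj (B k j) * a k) sums cnj (ip a (\<lambda>k. B k j))"
      by (rule iffD1[OF sums_cnj])
    then have "app (adj B) a j = cnj (ip a (\<lambda>k. B k j))" unfolding app_adj by (simp add: sums_iff)
    moreover have "ip a (\<lambda>k. B k j) = mmult A B i j"
      unfolding ip_def mmult_def a_def by simp
    ultimately show ?thesis by simp
  qed
  have e2: "ip a (app B u) = app A (app B u) i"
    unfolding ip_def app_def[of A] a_def by simp
  show ?thesis using W unfolding e1 e2 .
qed

lemma app_mmult: "bdd_op A \<Longrightarrow> bdd_op B \<Longrightarrow> l2 u \<Longrightarrow> app (mmult A B) u = app A (app B u)"
  unfolding app_def[of "mmult A B"] using mmult_sums by (auto simp: sums_iff)

lemma bdd_mmult: assumes A: "bdd_op A" and B: "bdd_op B" shows "bdd_op (mmult A B)"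
proof -
  obtain CA where CA: "0 \<le> CA" "\<And>w. l2 w \<Longrightarrow> l2norm2 (app A w) \<le> CA * l2norm2 w"
    using bdd_bound[OF A] by blast
  obtain CB where CB: "0 \<le> CB" "\<And>w. l2 w \<Longrightarrow> l2norm2 (app B w) \<le> CB * l2norm2 w"
    using bdd_bound[OF B] by blast
  have "(\<forall>i. summable (\<lambda>j. mmult A B i j * u j)) \<and> l2 (app (mmult A B) u) \<and> l2norm2 (app (mmult A B) u) \<le> (CA * CB) * l2norm2 u"
    if u: "l2 u" for u
  proof (intro conjI allI)
    show "summable (\<lambda>j. mmult A B i j * u j)" for i using mmult_sums[OF A B u] by (rule sums_summable)
    have lb: "l2 (app B u)" by (rule bdd_l2[OF B u])
    show "l2 (app (mmult A B) u)" unfolding app_mmult[OF A B u] by (rule bdd_l2[OF A lb])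
    have "l2norm2 (app A (app B u)) \<le> CA * l2norm2 (app B u)" by (rule CA(2)[OF lb])
    also have "\<dots> \<le> CA * (CB * l2norm2 u)" by (rule mult_left_mono[OF CB(2)[OF u] CA(1)])
    finally show "l2norm2 (app (mmult A B) u) \<le> (CA * CB) * l2norm2 u"
      unfolding app_mmult[OF A B u] by (simp add: mult.assoc)
  qed
  then show ?thesis unfolding bdd_op_def by blast
qed

lemma ip_herm: assumes h: "bdd_op h" and ha: "adj h = h" and u: "l2 u"
  shows "Im (ip u (app h u)) = 0"
proof -
  have W: "(\<lambda>j. cnj (app h u j) * u j) sums ip u (app h u)"
    using W_sums[OF h u u] unfolding ha .
  have "(\<lambda>j. cnj (u j) * app h u j) sums ip u (app h u)"
    by (rule ip_sums[OF bdd_l2[OF h u] u])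
  then have "(\<lambda>j. cnj (cnj (u j) * app h u j)) sums cnj (ip u (app h u))"
    by (rule iffD2[OF sums_cnj])
  then have "(\<lambda>j. cnj (app h u j) * u j) sums cnj (ip u (app h u))"
    by (simp add: mult.commute)
  from sums_unique2[OF W this] have "cnj (ip u (app h u)) = ip u (app h u)" by simp
  then have "Im (cnj (ip u (app h u))) = Im (ip u (app h u))" by simp
  then show ?thesis by simp
qed


lemma ip2: assumes "i \<noteq> j"
  shows "ip (\<lambda>n. sv a i n + sv b j n) w = cnj a * w i + cnj b * w j"
proof -
  have "(\<lambda>n. cnj (sv a i n) * w n + cnj (sv b j n) * w n) sums (cnj a * w i + cnj b * w j)"
  proof (rule sums_add)
    show "(\<lambda>n. cnj (sv a i n) * w n) sums (cnj a * w i)"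
    proof -
      have "(\<lambda>n. cnj (sv a i n) * w n) = (\<lambda>n. if n = i then cnj a * w i else 0)" by (auto simp: sv_def)
      then show ?thesis using sums_single[of i "\<lambda>_. cnj a * w i"] by simp
    qed
    show "(\<lambda>n. cnj (sv b j n) * w n) sums (cnj b * w j)"
    proof -
      have "(\<lambda>n. cnj (sv b j n) * w n) = (\<lambda>n. if n = j then cnj b * w j else 0)" by (auto simp: sv_def)
      then show ?thesis using sums_single[of j "\<lambda>_. cnj b * w j"] by simp
    qed
  qed
  then show ?thesis unfolding ip_def by (simp add: sums_iff distrib_right)
qed

lemma app2: "app M (\<lambda>n. sv a i n + sv b j n) = (\<lambda>k. M k i * a + M k j * b)"
proof
  fix k
  have "(\<lambda>n. M k n * sv a i n + M k n * sv b j n) sums (M k i * a + M k j * b)"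
    by (intro sums_add sums_sv)
  then show "app M (\<lambda>n. sv a i n + sv b j n) k = M k i * a + M k j * b"
    unfolding app_def by (simp add: sums_iff distrib_left)
qed

lemma l2_sv2: "l2 (\<lambda>n. sv a i n + sv b j n)"
  using l2_lin(1)[OF l2_sv l2_sv, of 1 a i 1 b j] by simp

lemma pos_diag: assumes "positive_op M" shows "Im (M i i) = 0" "0 \<le> Re (M i i)"
proof -
  have "Im (ip (sv 1 i) (app M (sv 1 i))) = 0 \<and> 0 \<le> Re (ip (sv 1 i) (app M (sv 1 i)))"
    using assms l2_sv unfolding positive_op_def by blast
  then show "Im (M i i) = 0" "0 \<le> Re (M i i)" by (auto simp: ip_sv app_sv)
qed

lemma pos_Q: assumes "positive_op M" "i \<noteq> j"
  shows "Im (cnj a * (M i i * a + M i j) + (M j i * a + M j j)) = 0"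
    and "0 \<le> Re (cnj a * (M i i * a + M i j) + (M j i * a + M j j))"
proof -
  have "Im (ip (\<lambda>n. sv a i n + sv 1 j n) (app M (\<lambda>n. sv a i n + sv 1 j n))) = 0 \<and>
        0 \<le> Re (ip (\<lambda>n. sv a i n + sv 1 j n) (app M (\<lambda>n. sv a i n + sv 1 j n)))"
    using assms(1) l2_sv2 unfolding positive_op_def by blast
  then show "Im (cnj a * (M i i * a + M i j) + (M j i * a + M j j)) = 0"
    "0 \<le> Re (cnj a * (M i i * a + M i j) + (M j i * a + M j j))"
    by (auto simp: ip2[OF assms(2)] app2)
qed

lemma pos_herm: assumes "positive_op M" shows "M j i = cnj (M i j)"
proof (cases "i = j")
  case True
  then show ?thesis using pos_diag(1)[OF assms, of i] by (simp add: complex_eq_iff)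
next
  case False
  have d: "Im (M i i) = 0" "Im (M j j) = 0" using pos_diag[OF assms] by auto
  have a1: "Im (M i j + M j i) = 0"
    using pos_Q(1)[OF assms False, of 1] d by simp
  have a2: "Re (M j i - M i j) = 0"
    using pos_Q(1)[OF assms False, of \<i>] d by (simp add: algebra_simps)
  show ?thesis using a1 a2 by (simp add: complex_eq_iff)
qed

lemma pos_zero_diag: assumes "positive_op M" "M i i = 0" shows "M i j = 0"
proof (cases "i = j")
  case True then show ?thesis using assms by simp
next
  case False
  have h: "M j i = cnj (M i j)" by (rule pos_herm[OF assms(1)])
  show ?thesis
  proof (rule ccontr)
    assume ne: "M i j \<noteq> 0"
    define c where "c = (Re (M j j) + 1) / (2 * (cmod (M i j))^2)"
    have cpos: "0 < (cmod (M i j))^2" using ne by simp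
    define a where "a = - complex_of_real c * M i j"
    have "0 \<le> Re (cnj a * (M i i * a + M i j) + (M j i * a + M j j))"
      by (rule pos_Q(2)[OF assms(1) False])
    also have "Re (cnj a * (M i i * a + M i j) + (M j i * a + M j j)) = - 2 * c * (cmod (M i j))^2 + Re (M j j)"
    proof -
      have cm: "cmod (M i j) * cmod (M i j) = Re (M i j) * Re (M i j) + Im (M i j) * Im (M i j)"
        using cmod_power2[of "M i j"] by (simp add: power2_eq_square)
      show ?thesis unfolding a_def h using assms(2) cm
        by (simp add: algebra_simps power2_eq_square)
    qed
    also have "\<dots> = -1" unfolding c_def using cpos by (simp add: field_simps)
    finally show False by simp
  qed
qed

lemma app_idm: "app idm u = u"
proof
  fix i
  have "(\<lambda>j. idm i j * u j) = (\<lambda>j. if j = i then u i else 0)" by (auto simp: idm_def)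
  then show "app idm u i = u i" unfolding app_def using sums_single[of i "\<lambda>_. u i"] by (simp add: sums_iff)
qed

lemma ip_self: "l2 u \<Longrightarrow> ip u u = of_real (l2norm2 u)"
proof -
  assume u: "l2 u"
  have "(\<lambda>n. cnj (u n) * u n) = (\<lambda>n. of_real ((cmod (u n))^2))" by (simp add: cnj_mult_self)
  moreover have "(\<lambda>n. complex_of_real ((cmod (u n))^2)) sums of_real (l2norm2 u)"
    using u unfolding l2_def l2norm2_def by (intro sums_of_real summable_sums)
  ultimately show ?thesis unfolding ip_def by (simp add: sums_iff)
qed

lemma bdd_idm: "bdd_op idm"
  unfolding bdd_op_def
proof (intro exI[of _ 1] allI impI conjI)
  fix u :: vec assume u: "l2 u"
  show "summable (\<lambda>j. idm i j * u j)" for i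
  proof -
    have "(\<lambda>j. idm i j * u j) = (\<lambda>j. if j = i then u i else 0)" by (auto simp: idm_def)
    then show ?thesis using sums_single[of i "\<lambda>_. u i"] sums_summable by simp
  qed
  show "l2 (app idm u)" using u by (simp add: app_idm)
  show "l2norm2 (app idm u) \<le> 1 * l2norm2 u" by (simp add: app_idm)
qed

lemma pos_idm: "positive_op idm"
  unfolding positive_op_def using bdd_idm by (simp add: app_idm ip_self l2norm2_nonneg)

lemma bdd_lin: assumes x: "bdd_op x" and y: "bdd_op y"
  shows "bdd_op (\<lambda>i j. a * x i j + b * y i j)"
proof -
  obtain Cx where Cx: "0 \<le> Cx" "\<And>w. l2 w \<Longrightarrow> l2norm2 (app x w) \<le> Cx * l2norm2 w"
    using bdd_bound[OF x] by blast
  obtain Cy where Cy: "0 \<le> Cy" "\<And>w. l2 w \<Longrightarrow> l2norm2 (app y w) \<le> Cy * l2norm2 w"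
    using bdd_bound[OF y] by blast
  have "(\<forall>i. summable (\<lambda>j. (a * x i j + b * y i j) * u j)) \<and> l2 (app (\<lambda>i j. a * x i j + b * y i j) u)
     \<and> l2norm2 (app (\<lambda>i j. a * x i j + b * y i j) u) \<le> (2 * (cmod a)^2 * Cx + 2 * (cmod b)^2 * Cy) * l2norm2 u"
    if u: "l2 u" for u
  proof -
    have s: "(\<lambda>j. (a * x i j + b * y i j) * u j) sums (a * app x u i + b * app y u i)" for i
    proof -
      have "(\<lambda>j. a * (x i j * u j) + b * (y i j * u j)) sums (a * app x u i + b * app y u i)"
        unfolding app_def
        by (intro sums_add sums_mult summable_sums bdd_row_summable[OF x u] bdd_row_summable[OF y u])
      then show ?thesis by (simp add: algebra_simps)
    qed
    have e: "app (\<lambda>i j. a * x i j + b * y i j) u = (\<lambda>i. a * app x u i + b * app y u i)"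
      unfolding app_def[of "\<lambda>i j. a * x i j + b * y i j"] using s by (auto simp: sums_iff)
    have lx: "l2 (app x u)" "l2 (app y u)" using bdd_l2 x y u by auto
    have "l2norm2 (\<lambda>i. a * app x u i + b * app y u i) \<le> 2 * (cmod a)^2 * l2norm2 (app x u) + 2 * (cmod b)^2 * l2norm2 (app y u)"
      by (rule l2_lin(2)[OF lx])
    also have "\<dots> \<le> 2 * (cmod a)^2 * (Cx * l2norm2 u) + 2 * (cmod b)^2 * (Cy * l2norm2 u)"
      by (intro add_mono mult_left_mono Cx(2) Cy(2) u) auto
    finally have n: "l2norm2 (app (\<lambda>i j. a * x i j + b * y i j) u) \<le> (2 * (cmod a)^2 * Cx + 2 * (cmod b)^2 * Cy) * l2norm2 u"
      unfolding e by (simp add: algebra_simps)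
    have sm: "\<forall>i. summable (\<lambda>j. (a * x i j + b * y i j) * u j)" using s sums_summable by blast
    have "l2 (app (\<lambda>i j. a * x i j + b * y i j) u)" unfolding e by (rule l2_lin(1)[OF lx])
    with sm n show ?thesis by blast
  qed
  then show ?thesis unfolding bdd_op_def by blast
qed

lemma pos_shift: assumes h: "bdd_op h" and ha: "adj h = h"
  shows "\<exists>c. positive_op (\<lambda>i j. complex_of_real c * idm i j + h i j) \<and> positive_op (\<lambda>i j. complex_of_real c * idm i j + 0 * idm i j)"
proof -
  obtain C where C: "0 \<le> C" "\<And>w. l2 w \<Longrightarrow> l2norm2 (app h w) \<le> C * l2norm2 w"
    using bdd_bound[OF h] by blast
  define c where "c = sqrt C"
  have c0: "0 \<le> c" unfolding c_def using C by simp
  have b1: "bdd_op (\<lambda>i j. complex_of_real c * idm i j + h i j)"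
    using bdd_lin[OF bdd_idm h, of c 1] by simp
  have b2: "bdd_op (\<lambda>i j. complex_of_real c * idm i j + 0 * idm i j)"
    using bdd_lin[OF bdd_idm bdd_idm, of c 0] by simp
  have appe: "app (\<lambda>i j. complex_of_real c * idm i j + b * h' i j) u = (\<lambda>i. complex_of_real c * u i + b * app h' u i)"
    if "bdd_op h'" "l2 u" for u :: vec and b :: complex and h' :: mat
  proof -
    have s: "(\<lambda>j. (complex_of_real c * idm i j + b * h' i j) * u j) sums (complex_of_real c * u i + b * app h' u i)" for i
    proof -
      have "(\<lambda>j. c * (idm i j * u j) + b * (h' i j * u j)) sums (complex_of_real c * app idm u i + b * app h' u i)"
        unfolding app_def
        by (intro sums_add sums_mult summable_sums bdd_row_summable[OF bdd_idm that(2)] bdd_row_summable[OF that])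
      then show ?thesis by (simp add: algebra_simps app_idm)
    qed
    then show ?thesis unfolding app_def[of "\<lambda>i j. complex_of_real c * idm i j + b * h' i j"]
      by (auto simp: sums_iff)
  qed
  have ipe: "ip u (\<lambda>i. complex_of_real c * u i + b * app h' u i) = complex_of_real c * complex_of_real (l2norm2 u) + b * ip u (app h' u)"
    if "bdd_op h'" "l2 u" for u :: vec and b :: complex and h' :: mat
  proof -
    have "(\<lambda>n. complex_of_real c * (cnj (u n) * u n) + b * (cnj (u n) * app h' u n)) sums (complex_of_real c * ip u u + b * ip u (app h' u))"
      by (intro sums_add sums_mult ip_sums that bdd_l2)
    then show ?thesis unfolding ip_def[of u "\<lambda>i. c * u i + b * app h' u i"] using ip_self[OF that(2)]
      by (simp add: sums_iff algebra_simps)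
  qed
  have "positive_op (\<lambda>i j. complex_of_real c * idm i j + h i j)"
    unfolding positive_op_def
  proof (intro conjI b1 allI impI)
    fix u assume u: "l2 u"
    have e: "ip u (app (\<lambda>i j. complex_of_real c * idm i j + h i j) u) = c * l2norm2 u + ip u (app h u)"
      using appe[OF h u, of 1] ipe[OF h u, of 1] by simp
    show "Im (ip u (app (\<lambda>i j. complex_of_real c * idm i j + h i j) u)) = 0"
      unfolding e using ip_herm[OF h ha u] by simp
    have "(cmod (ip u (app h u)))^2 \<le> l2norm2 u * l2norm2 (app h u)"
      by (rule ip_CS[OF bdd_l2[OF h u] u])
    also have "\<dots> \<le> l2norm2 u * (C * l2norm2 u)" by (rule mult_left_mono[OF C(2)[OF u] l2norm2_nonneg[OF u]])
    also have "\<dots> = (c * l2norm2 u)^2" unfolding c_def using C(1) by (simp add: power2_eq_square)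
    finally have "cmod (ip u (app h u)) \<le> c * l2norm2 u"
      using c0 l2norm2_nonneg[OF u] by (meson mult_nonneg_nonneg power2_le_imp_le)
    then have "- Re (ip u (app h u)) \<le> c * l2norm2 u" using abs_Re_le_cmod[of "ip u (app h u)"] by linarith
    then show "0 \<le> Re (ip u (app (\<lambda>i j. complex_of_real c * idm i j + h i j) u))"
      unfolding e by simp
  qed
  moreover have "positive_op (\<lambda>i j. complex_of_real c * idm i j + 0 * idm i j)"
    unfolding positive_op_def
  proof (intro conjI b2 allI impI)
    fix u assume u: "l2 u"
    have e: "ip u (app (\<lambda>i j. complex_of_real c * idm i j + 0 * idm i j) u) = c * l2norm2 u"
      using appe[OF bdd_idm u, of 0] ipe[OF bdd_idm u, of 0] by simp
    show "Im (ip u (app (\<lambda>i j. complex_of_real c * idm i j + 0 * idm i j) u)) = 0" unfolding e by simp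
    show "0 \<le> Re (ip u (app (\<lambda>i j. complex_of_real c * idm i j + 0 * idm i j) u))"
      unfolding e using c0 l2norm2_nonneg[OF u] by simp
  qed
  ultimately show ?thesis by blast
qed


lemma Pt_sv: "Pt r lam mu zp zm t (sv c j) = sv (exp (complex_of_real t * gdiag r lam mu zp zm j) * c) j"
  unfolding Pt_def sv_def by auto

lemma omega0: "omega r 0 = 0" unfolding omega_def by simp

lemma L1_sv: "L1 r mu (sv c j) = sv (complex_of_real mu * complex_of_real (sqrt (omega r j)) * c) (j - 1)"
proof (cases j)
  case 0 then show ?thesis unfolding L1_def annB_def sv_def by (auto simp: omega0)
next
  case (Suc k) then show ?thesis unfolding L1_def annB_def sv_def by auto
qed

lemma L2_sv: "L2 r lam (sv c j) = sv (complex_of_real lam * complex_of_real (sqrt (omega r (Suc j))) * c) (Suc j)"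
  unfolding L2_def creB_def sv_def by (auto split: nat.splits)

locale qs =
  fixes r lam mu zp zm :: real and T :: "real \<Rightarrow> mat \<Rightarrow> mat"
  assumes r: "0 < r" and lam: "0 < lam" and lm: "lam < mu"
    and mq: "minimal_qds r lam mu zp zm T"
begin

abbreviation "g \<equiv> gdiag r lam mu zp zm"
abbreviation "w \<equiv> omega r"
definition "cc i j = cnj (g i) + g j"
definition "Kc x s i j = complex_of_real (mu^2 * sqrt (w i) * sqrt (w j)) * T s x (i - 1) (j - 1)
   + complex_of_real (lam^2 * sqrt (w (Suc i)) * sqrt (w (Suc j))) * T s x (Suc i) (Suc j)"

lemma mu: "0 < mu" using lam lm by simp

lemma T_bdd: "0 \<le> t \<Longrightarrow> bdd_op x \<Longrightarrow> bdd_op (T t x)"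
  using mq unfolding minimal_qds_def qds_solution_def by blast

lemma T_pos: "0 \<le> t \<Longrightarrow> positive_op x \<Longrightarrow> positive_op (T t x)"
  using mq unfolding minimal_qds_def qds_solution_def by blast

lemma T_eq: "qds_eq r lam mu zp zm T"
  using mq unfolding minimal_qds_def qds_solution_def by blast

lemma T_lin: "0 \<le> t \<Longrightarrow> bdd_op x \<Longrightarrow> bdd_op y \<Longrightarrow>
   T t (\<lambda>i j. a * x i j + b * y i j) = (\<lambda>i j. a * T t x i j + b * T t y i j)"
  using mq unfolding minimal_qds_def by blast

lemma T_min: "qds_solution r lam mu zp zm S \<Longrightarrow> 0 \<le> t \<Longrightarrow> positive_op x \<Longrightarrow> op_le (T t x) (S t x)"
  using mq unfolding minimal_qds_def by blast

lemma w_nonneg: "0 \<le> w n" unfolding omega_def using r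
  by (cases n) (auto intro!: mult_nonneg_nonneg)

lemma w_pos: "0 < n \<Longrightarrow> 0 < w n" unfolding omega_def using r
  by (cases n) (auto intro!: mult_pos_pos)

lemma exp_cnj_mult: "cnj (exp (complex_of_real t * a)) * exp (complex_of_real t * b) = exp (complex_of_real t * (cnj a + b))"
proof -
  have "cnj (exp (complex_of_real t * a)) = exp (complex_of_real t * cnj a)" by (simp add: exp_cnj)
  then show ?thesis by (simp add: exp_add[symmetric] distrib_left)
qed

lemma entry_eq:
  assumes t: "0 \<le> t" and x: "bdd_op x"
  shows "((\<lambda>s. exp (complex_of_real (t - s) * cc i j) * Kc x s i j) has_integral
           (T t x i j - exp (complex_of_real t * cc i j) * x i j)) {0..t}"
proof -
  have H: "((\<lambda>s. ip (L1 r mu (Pt r lam mu zp zm (t - s) (sv 1 i))) (app (T s x) (L1 r mu (Pt r lam mu zp zm (t - s) (sv 1 j))))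
            + ip (L2 r lam (Pt r lam mu zp zm (t - s) (sv 1 i))) (app (T s x) (L2 r lam (Pt r lam mu zp zm (t - s) (sv 1 j)))))
         has_integral
           (ip (sv 1 i) (app (T t x) (sv 1 j)) - ip (Pt r lam mu zp zm t (sv 1 i)) (app x (Pt r lam mu zp zm t (sv 1 j))))) {0..t}"
    using T_eq t x domG_sv unfolding qds_eq_def by blast
  have e1: "ip (L1 r mu (Pt r lam mu zp zm (t - s) (sv 1 i))) (app (T s x) (L1 r mu (Pt r lam mu zp zm (t - s) (sv 1 j))))
            + ip (L2 r lam (Pt r lam mu zp zm (t - s) (sv 1 i))) (app (T s x) (L2 r lam (Pt r lam mu zp zm (t - s) (sv 1 j))))
          = exp (complex_of_real (t - s) * cc i j) * Kc x s i j" for s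
  proof -
    have a: "cnj (complex_of_real mu * complex_of_real (sqrt (w i)) * exp (complex_of_real (t - s) * g i)) *
        (complex_of_real mu * complex_of_real (sqrt (w j)) * exp (complex_of_real (t - s) * g j))
      = complex_of_real (mu^2 * sqrt (w i) * sqrt (w j)) * exp (complex_of_real (t - s) * cc i j)"
      using exp_cnj_mult[of "t - s" "g i" "g j"] unfolding cc_def by (simp add: power2_eq_square algebra_simps)
    have b: "cnj (complex_of_real lam * complex_of_real (sqrt (w (Suc i))) * exp (complex_of_real (t - s) * g i)) *
        (complex_of_real lam * complex_of_real (sqrt (w (Suc j))) * exp (complex_of_real (t - s) * g j))
      = complex_of_real (lam^2 * sqrt (w (Suc i)) * sqrt (w (Suc j))) * exp (complex_of_real (t - s) * cc i j)"
      using exp_cnj_mult[of "t - s" "g i" "g j"] unfolding cc_def by (simp add: power2_eq_square algebra_simps)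
    let ?A = "complex_of_real mu * complex_of_real (sqrt (w i)) * exp (complex_of_real (t - s) * g i)"
    let ?B = "complex_of_real mu * complex_of_real (sqrt (w j)) * exp (complex_of_real (t - s) * g j)"
    let ?A' = "complex_of_real lam * complex_of_real (sqrt (w (Suc i))) * exp (complex_of_real (t - s) * g i)"
    let ?B' = "complex_of_real lam * complex_of_real (sqrt (w (Suc j))) * exp (complex_of_real (t - s) * g j)"
    have "ip (L1 r mu (Pt r lam mu zp zm (t - s) (sv 1 i))) (app (T s x) (L1 r mu (Pt r lam mu zp zm (t - s) (sv 1 j))))
            + ip (L2 r lam (Pt r lam mu zp zm (t - s) (sv 1 i))) (app (T s x) (L2 r lam (Pt r lam mu zp zm (t - s) (sv 1 j))))
         = (cnj ?A * ?B) * T s x (i - 1) (j - 1) + (cnj ?A' * ?B') * T s x (Suc i) (Suc j)"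
      unfolding Pt_sv L1_sv L2_sv ip_sv app_sv by (simp only: mult_1_right mult_1_left mult_ac)
    also have "\<dots> = exp (complex_of_real (t - s) * cc i j) * Kc x s i j"
      unfolding a b Kc_def by (simp only: mult_ac distrib_left)
    finally show ?thesis .
  qed
  have e2: "ip (sv 1 i) (app (T t x) (sv 1 j)) - ip (Pt r lam mu zp zm t (sv 1 i)) (app x (Pt r lam mu zp zm t (sv 1 j)))
     = T t x i j - exp (complex_of_real t * cc i j) * x i j"
    unfolding Pt_sv ip_sv app_sv using exp_cnj_mult[of t "g i" "g j"] unfolding cc_def
    by (simp add: algebra_simps)
  show ?thesis using H unfolding e1 e2 .
qed

end

lemma exp_ofreal_deriv:
  "((\<lambda>t. exp (complex_of_real t * c)) has_vector_derivative (c * exp (complex_of_real t * c))) (at t within S)"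
proof -
  have "((\<lambda>t. exp (t *\<^sub>R c)) has_vector_derivative exp (t *\<^sub>R c) * c) (at t within S)"
    by (rule exp_scaleR_has_vector_derivative_right)
  then show ?thesis by (simp add: scaleR_conv_of_real mult.commute)
qed

locale mild =
  fixes f h :: "real \<Rightarrow> complex" and c f0 :: complex
  assumes M: "\<And>t. 0 \<le> t \<Longrightarrow> ((\<lambda>s. exp (complex_of_real (t - s) * c) * h s) has_integral (f t - exp (complex_of_real t * c) * f0)) {0..t}"
begin

definition "phi s = exp (- (complex_of_real s * c)) * h s"

lemma phi_int: assumes "0 \<le> t" shows "(phi has_integral (exp (- (complex_of_real t * c)) * f t - f0)) {0..t}"
proof -
  have "((\<lambda>s. exp (- (complex_of_real t * c)) * (exp (complex_of_real (t - s) * c) * h s)) has_integral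
        exp (- (complex_of_real t * c)) * (f t - exp (complex_of_real t * c) * f0)) {0..t}"
    by (rule has_integral_mult_right[OF M[OF assms]])
  moreover have "(\<lambda>s. exp (- (complex_of_real t * c)) * (exp (complex_of_real (t - s) * c) * h s)) = phi"
  proof
    fix s
    have "exp (- (complex_of_real t * c)) * exp (complex_of_real (t - s) * c) = exp (- (complex_of_real s * c))"
      by (simp add: exp_add[symmetric] algebra_simps)
    then show "exp (- (complex_of_real t * c)) * (exp (complex_of_real (t - s) * c) * h s) = phi s"
      unfolding phi_def by (simp add: mult.assoc[symmetric])
  qed
  moreover have "exp (- (complex_of_real t * c)) * (f t - exp (complex_of_real t * c) * f0) = exp (- (complex_of_real t * c)) * f t - f0"
    by (simp add: algebra_simps exp_minus field_simps)
  ultimately show ?thesis by simp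
qed

lemma f_repr: assumes "0 \<le> t" shows "f t = exp (complex_of_real t * c) * (f0 + integral {0..t} phi)"
proof -
  have "integral {0..t} phi = exp (- (complex_of_real t * c)) * f t - f0"
    using phi_int[OF assms] by (rule integral_unique)
  then show ?thesis by (simp add: exp_minus field_simps)
qed

lemma f0: "f 0 = f0"
  using f_repr[of 0] by simp

lemma cont: "continuous_on {0..T} f"
proof -
  have "continuous_on {0..T} (\<lambda>t. exp (complex_of_real t * c) * (f0 + integral {0..t} phi))"
  proof (intro continuous_intros)
    show "continuous_on {0..T} (\<lambda>t. integral {0..t} phi)"
    proof (cases "0 \<le> T")
      case True
      then show ?thesis using phi_int[OF True] by (intro indefinite_integral_continuous_1) blast
    next
      case False then show ?thesis by simp
    qed
  qed
  then show ?thesis by (rule continuous_on_eq) (auto simp: f_repr)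
qed

lemma strong:
  assumes hc: "continuous_on {0..T} h" and T: "0 \<le> T"
  shows "((\<lambda>s. c * f s + h s) has_integral (f T - f 0)) {0..T}"
proof -
  have pc: "continuous_on {0..T} phi" unfolding phi_def by (intro continuous_intros hc)
  define G where "G t = exp (complex_of_real t * c) * (f0 + integral {0..t} phi)" for t
  have D: "(G has_vector_derivative (c * f t + h t)) (at t within {0..T})" if t: "t \<in> {0..T}" for t
  proof -
    have d1: "((\<lambda>u. integral {0..u} phi) has_vector_derivative phi t) (at t within {0..T})"
      by (rule integral_has_vector_derivative[OF pc t])
    have "(G has_vector_derivative (exp (complex_of_real t * c) * phi t + c * exp (complex_of_real t * c) * (f0 + integral {0..t} phi))) (at t within {0..T})"
      unfolding G_def
      by (rule has_vector_derivative_mult[OF exp_ofreal_deriv has_vector_derivative_add[OF has_vector_derivative_const d1], simplified])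
    moreover have "exp (complex_of_real t * c) * phi t + c * exp (complex_of_real t * c) * (f0 + integral {0..t} phi) = c * f t + h t"
    proof -
      have "exp (complex_of_real t * c) * phi t = h t" unfolding phi_def
        by (simp add: mult.assoc[symmetric] exp_add[symmetric])
      moreover have "f t = exp (complex_of_real t * c) * (f0 + integral {0..t} phi)" using t by (intro f_repr) auto
      ultimately show ?thesis by (simp add: algebra_simps)
    qed
    ultimately show ?thesis by simp
  qed
  have "((\<lambda>s. c * f s + h s) has_integral (G T - G 0)) {0..T}"
    by (rule fundamental_theorem_of_calculus[OF T D])
  moreover have "G T = f T" "G 0 = f 0" unfolding G_def using T by (auto simp: f_repr)
  ultimately show ?thesis by simp
qed

end

context qs begin

lemma entry_mild: "bdd_op x \<Longrightarrow> mild (\<lambda>s. T s x i j) (\<lambda>s. Kc x s i j) (cc i j) (x i j)"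
  unfolding mild_def using entry_eq by blast

lemma T0_entry: "bdd_op x \<Longrightarrow> T 0 x i j = x i j"
  using mild.f0[OF entry_mild] by blast

lemma T0: "bdd_op x \<Longrightarrow> T 0 x = x"
  using T0_entry by blast

lemma entry_cont: "bdd_op x \<Longrightarrow> continuous_on {0..t} (\<lambda>s. T s x i j)"
  using mild.cont[OF entry_mild] by blast

lemma Kc_cont: "bdd_op x \<Longrightarrow> continuous_on {0..t} (\<lambda>s. Kc x s i j)"
  unfolding Kc_def by (intro continuous_intros entry_cont)

lemma entry_strong: "bdd_op x \<Longrightarrow> 0 \<le> t \<Longrightarrow>
  ((\<lambda>s. cc i j * T s x i j + Kc x s i j) has_integral (T t x i j - x i j)) {0..t}"
proof -
  assume x: "bdd_op x" and t: "0 \<le> t"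
  have "((\<lambda>s. cc i j * T s x i j + Kc x s i j) has_integral (T t x i j - T 0 x i j)) {0..t}"
    by (rule mild.strong[OF entry_mild[OF x] Kc_cont[OF x] t])
  then show ?thesis by (simp add: T0_entry[OF x])
qed

lemma fixed_rel:
  assumes x: "bdd_op x" and fx: "\<And>t. 0 \<le> t \<Longrightarrow> T t x = x"
  shows "cc i j * x i j + (complex_of_real (mu^2 * sqrt (w i) * sqrt (w j)) * x (i - 1) (j - 1)
   + complex_of_real (lam^2 * sqrt (w (Suc i)) * sqrt (w (Suc j))) * x (Suc i) (Suc j)) = 0"
proof -
  let ?K = "cc i j * x i j + (complex_of_real (mu^2 * sqrt (w i) * sqrt (w j)) * x (i - 1) (j - 1)
   + complex_of_real (lam^2 * sqrt (w (Suc i)) * sqrt (w (Suc j))) * x (Suc i) (Suc j))"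
  have "((\<lambda>s. cc i j * T s x i j + Kc x s i j) has_integral (T 1 x i j - x i j)) {0..1}"
    by (rule entry_strong[OF x]) simp
  then have "((\<lambda>s. cc i j * T s x i j + Kc x s i j) has_integral 0) {0..1}"
    by (simp add: fx)
  note I = this

  have "((\<lambda>s::real. ?K) has_integral 0) {0..1}"
  proof (rule has_integral_eq[OF _ I])
    fix s :: real assume "s \<in> {0..1}"
    then show "cc i j * T s x i j + Kc x s i j = ?K" by (simp add: fx Kc_def)
  qed
  moreover have "((\<lambda>s. ?K) has_integral ?K) {0..1::real}"
    using has_integral_const_real[of ?K 0 1] by simp
  ultimately show ?thesis by (rule has_integral_unique[symmetric])
qed

end

lemma pow_unbounded:
  fixes q M :: real assumes q: "1 < q"
  shows "\<exists>n. M < q ^ n / (real n + 2)^2"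
proof -
  define d where "d = q - 1"
  have d: "0 < d" using q d_def by simp
  obtain k :: nat where k: "k > max 1 (25 * M / d^3)" using reals_Archimedean2 by blast
  have k1: "1 \<le> real k" using k by simp
  have "(1 + d)^k \<ge> 1 + real k * d" by (rule Bernoulli_inequality) (use d in simp)
  then have b: "q^k \<ge> real k * d" using d_def d by simp
  have "q ^ (3 * k) = (q^k)^3" by (simp add: power_mult mult.commute)
  also have "\<dots> \<ge> (real k * d)^3" by (rule power_mono[OF b]) (use d in simp)
  finally have qk: "(real k * d)^3 \<le> q ^ (3 * k)" .
  have den: "(real (3 * k) + 2)^2 \<le> 25 * (real k)^2"
  proof -
    have "real (3 * k) + 2 \<le> 5 * real k" using k1 by simp
    then have "(real (3 * k) + 2)^2 \<le> (5 * real k)^2" by (rule power_mono) simp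
    then show ?thesis by (simp add: power_mult_distrib)
  qed
  have pos: "0 < (real (3 * k) + 2)^2" by simp
  have "M < real k * d^3 / 25" using k d by (simp add: field_simps)
  also have "real k * d^3 / 25 = (real k * d)^3 / (25 * (real k)^2)"
    using k1 by (simp add: field_simps power2_eq_square power3_eq_cube)
  also have "\<dots> \<le> q ^ (3 * k) / (25 * (real k)^2)"
    by (rule divide_right_mono[OF qk]) simp
  also have "\<dots> \<le> q ^ (3 * k) / (real (3 * k) + 2)^2"
    by (rule divide_left_mono[OF den]) (use pos q k1 in auto)
  finally show ?thesis by blast
qed

lemma growth_gen:
  fixes v D :: "nat \<Rightarrow> real"
  assumes q: "1 < q" and vpos: "\<And>n. 0 < v n" and vb: "\<And>n. v n \<le> A * (real n + 2)^2"
    and rec: "\<And>n. q * v n * D n \<le> v (Suc n) * D (Suc n)"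
    and D0: "0 < D 0" and Db: "\<And>n. D n \<le> B"
  shows False
proof -
  define R where "R n = v n * D n / q^n" for n
  have qp: "0 < q" using q by simp
  have mono: "R n \<le> R (Suc n)" for n
  proof -
    have "R n = q * v n * D n / q^(Suc n)" unfolding R_def using qp by (simp add: field_simps)
    also have "\<dots> \<le> v (Suc n) * D (Suc n) / q^(Suc n)"
      by (rule divide_right_mono[OF rec]) (use qp in simp)
    finally show ?thesis unfolding R_def .
  qed
  have R0: "R 0 \<le> R n" for n
    by (induction n) (auto intro: order_trans[OF _ mono])
  have R0p: "0 < R 0" unfolding R_def using vpos[of 0] D0 by simp
  have A: "0 < A" using vpos[of 0] vb[of 0] by simp
  obtain n where n: "A * B / R 0 < q ^ n / (real n + 2)^2" using pow_unbounded[OF q] by blast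
  have "R 0 * q^n \<le> v n * D n" using R0[of n] unfolding R_def using qp by (simp add: field_simps)
  also have "\<dots> \<le> v n * B" by (rule mult_left_mono[OF Db]) (use vpos[of n] in simp)
  also have "\<dots> \<le> A * (real n + 2)^2 * B"
  proof -
    have "0 < v n * D n / q^n" using R0[of n] R0p unfolding R_def by linarith
    then have "0 < v n * D n" using qp by (simp add: zero_less_divide_iff)
    then have "0 \<le> D n" using vpos[of n] by (simp add: zero_less_mult_iff)
    then have "0 \<le> B" using Db[of n] by simp
    then show ?thesis by (rule mult_right_mono[OF vb])
  qed
  finally have "R 0 * q^n \<le> A * (real n + 2)^2 * B" .
  then have "q ^ n / (real n + 2)^2 \<le> A * B / R 0" using R0p by (simp add: field_simps)
  with n show False by simp
qed


lemma amgm_sqrt: "0 \<le> a \<Longrightarrow> 0 \<le> b \<Longrightarrow> sqrt a * sqrt b \<le> (a + b) / 2"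
proof -
  assume a: "0 \<le> a" and b: "0 \<le> b"
  have "0 \<le> (sqrt a - sqrt b)^2" by simp
  then show ?thesis using a b by (simp add: power2_diff)
qed

context qs begin

lemma Re_g: "Re (g n) = - (lam^2 * w (Suc n) + mu^2 * w n) / 2"
  unfolding gdiag_def by simp

lemma Re_cc: "Re (cc i j) = - ((lam^2 * w (Suc i) + mu^2 * w i) + (lam^2 * w (Suc j) + mu^2 * w j)) / 2"
  unfolding cc_def using Re_g[of i] Re_g[of j] by simp

lemma cc_diag: "cc i i = complex_of_real (- (lam^2 * w (Suc i) + mu^2 * w i))"
  unfolding cc_def gdiag_def by (simp add: complex_eq_iff)

lemma w_mono: assumes "m \<le> m'" shows "w m \<le> w m'"
proof (cases m)
  case 0 then show ?thesis using w_nonneg by (simp add: omega0)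
next
  case (Suc k)
  then show ?thesis unfolding omega_def using r assms by (intro mult_mono) auto
qed

lemma sqw: "sqrt (w i) * sqrt (w i) = w i"
  using w_nonneg by simp

lemma abs_w[simp]: "\<bar>w i\<bar> = w i"
  using w_nonneg by simp

lemma fixed_diag:
  assumes x: "bdd_op x" and fx: "\<And>t. 0 \<le> t \<Longrightarrow> T t x = x"
  shows "x i i = x 0 0"
proof -
  have rel: "cc i i * x i i + (complex_of_real (mu^2 * w i) * x (i - 1) (i - 1)
      + complex_of_real (lam^2 * w (Suc i)) * x (Suc i) (Suc i)) = 0" for i
    using fixed_rel[OF x fx, of i i] by (simp add: sqw mult.assoc)
  have l2: "0 < lam^2" using lam by simp
  have e: "x (Suc i) (Suc i) = x i i" for i
  proof (induction i)
    case 0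
    have "complex_of_real (lam^2 * w 1) * (x 1 1 - x 0 0) = 0"
      using rel[of 0] unfolding cc_diag by (simp add: omega0 algebra_simps)
    then show ?case using w_pos[of 1] l2 by simp
  next
    case (Suc i)
    have "complex_of_real (lam^2 * w (Suc (Suc i))) * (x (Suc (Suc i)) (Suc (Suc i)) - x (Suc i) (Suc i))
        = complex_of_real (mu^2 * w (Suc i)) * (x (Suc i) (Suc i) - x i i)"
      using rel[of "Suc i"] unfolding cc_diag by (simp add: algebra_simps)
    then show ?case using Suc w_pos[of "Suc (Suc i)"] l2 by simp
  qed
  show ?thesis by (induction i) (simp_all add: e)
qed


lemma fixed_offdiag:
  assumes x: "bdd_op x" and fx: "\<And>t. 0 \<le> t \<Longrightarrow> T t x = x"
    and k: "ka = 0 \<or> kb = 0" "0 < ka + kb"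
  shows "x (n + ka) (n + kb) = 0"
proof -
  define X where "X n = x (n + ka) (n + kb)" for n
  define s where "s n = sqrt (w (n + ka)) * sqrt (w (n + kb))" for n
  define C where "C n = cc (n + ka) (n + kb)" for n
  define q where "q = mu^2 / lam^2"
  have l2: "0 < lam^2" using lam by simp
  have q1: "1 < q" unfolding q_def using lam lm by (simp add: power_strict_mono)
  have s0: "s 0 = 0" unfolding s_def using k(1) by (auto simp: omega0)
  have spos: "0 < s (Suc n)" for n unfolding s_def using w_pos by simp
  have snn: "0 \<le> s n" for n unfolding s_def using w_nonneg by simp
  have rel: "C n * X n + (complex_of_real (mu^2 * s n) * X (n - 1) + complex_of_real (lam^2 * s (Suc n)) * X (Suc n)) = 0" for n
  proof (cases n)
    case 0
    have "C n * X n + (complex_of_real (mu^2 * s n) * x (n + ka - 1) (n + kb - 1) + complex_of_real (lam^2 * s (Suc n)) * X (Suc n)) = 0"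
      using fixed_rel[OF x fx, of "n + ka" "n + kb"] unfolding C_def X_def s_def by (simp add: mult.assoc)
    then show ?thesis using 0 s0 by simp
  next
    case (Suc m)
    have "C n * X n + (complex_of_real (mu^2 * s n) * x (n + ka - 1) (n + kb - 1) + complex_of_real (lam^2 * s (Suc n)) * X (Suc n)) = 0"
      using fixed_rel[OF x fx, of "n + ka" "n + kb"] unfolding C_def X_def s_def by (simp add: mult.assoc)
    moreover have "x (n + ka - 1) (n + kb - 1) = X (n - 1)" unfolding X_def using Suc by simp
    ultimately show ?thesis by simp
  qed
  define p where "p n = cmod (X n)" for n
  have pnn: "0 \<le> p n" for n unfolding p_def by simp
  have Cb: "lam^2 * s (Suc n) + mu^2 * s n + mu^2 * (if n = 0 then w (ka + kb) / 2 else 0) \<le> cmod (C n)" for n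
  proof -
    have a1: "s (Suc n) \<le> (w (Suc n + ka) + w (Suc n + kb)) / 2" unfolding s_def by (rule amgm_sqrt) (use w_nonneg in auto)
    have a2: "s n \<le> (w (n + ka) + w (n + kb)) / 2" unfolding s_def by (rule amgm_sqrt) (use w_nonneg in auto)
    have "- Re (C n) \<le> cmod (C n)" using abs_Re_le_cmod[of "C n"] by linarith
    moreover have "- Re (C n) = (lam^2 * (w (Suc n + ka) + w (Suc n + kb)) + mu^2 * (w (n + ka) + w (n + kb))) / 2"
      unfolding C_def Re_cc by (simp add: field_simps)
    moreover have "lam^2 * s (Suc n) + mu^2 * s n + mu^2 * (if n = 0 then w (ka + kb) / 2 else 0)
        \<le> (lam^2 * (w (Suc n + ka) + w (Suc n + kb)) + mu^2 * (w (n + ka) + w (n + kb))) / 2"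
    proof (cases "n = 0")
      case True
      have "w ka + w kb = w (ka + kb)" using k(1) by (auto simp: omega0)
      moreover have "lam^2 * s (Suc n) \<le> lam^2 * ((w (Suc n + ka) + w (Suc n + kb)) / 2)" by (rule mult_left_mono[OF a1]) simp
      ultimately show ?thesis using True s0 by (simp add: algebra_simps)
    next
      case False
      have "lam^2 * s (Suc n) \<le> lam^2 * ((w (Suc n + ka) + w (Suc n + kb)) / 2)" by (rule mult_left_mono[OF a1]) simp
      moreover have "mu^2 * s n \<le> mu^2 * ((w (n + ka) + w (n + kb)) / 2)" by (rule mult_left_mono[OF a2]) simp
      ultimately show ?thesis using False by (simp add: algebra_simps)
    qed
    ultimately show ?thesis by linarith
  qed
  have ineq: "lam^2 * s (Suc n) * p (Suc n) \<ge> cmod (C n) * p n - mu^2 * s n * p (n - 1)" for n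
  proof -
    have "complex_of_real (lam^2 * s (Suc n)) * X (Suc n) = - (C n * X n + complex_of_real (mu^2 * s n) * X (n - 1))"
      using rel[of n] by (simp add: algebra_simps add_eq_0_iff)
    then have "lam^2 * s (Suc n) * p (Suc n) = cmod (C n * X n + complex_of_real (mu^2 * s n) * X (n - 1))"
      unfolding p_def using snn[of "Suc n"]
      by (metis abs_of_nonneg norm_minus_cancel norm_mult norm_of_real mult_nonneg_nonneg zero_le_power2)
    also have "\<dots> \<ge> cmod (C n * X n) - cmod (complex_of_real (mu^2 * s n) * X (n - 1))"
      by (rule norm_diff_ineq)
    finally have H: "cmod (C n * X n) - cmod (complex_of_real (mu^2 * s n) * X (n - 1)) \<le> lam^2 * s (Suc n) * p (Suc n)" .
    have e: "cmod (complex_of_real (mu^2 * s n)) = mu^2 * s n"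
      unfolding norm_of_real using snn[of n] by simp
    show ?thesis using H unfolding norm_mult e p_def by simp
  qed
  have ind: "lam^2 * s (Suc n) * (p (Suc n) - p n) \<ge> mu^2 * s n * (p n - p (n - 1))" for n
  proof -
    have "0 \<le> mu^2 * (if n = 0 then w (ka + kb) / 2 else 0)" using w_nonneg by auto
    then have "lam^2 * s (Suc n) + mu^2 * s n \<le> cmod (C n)" using Cb[of n] by linarith
    then have "(lam^2 * s (Suc n) + mu^2 * s n) * p n \<le> cmod (C n) * p n"
      using pnn[of n] by (rule mult_right_mono)
    then show ?thesis using ineq[of n] by (simp add: algebra_simps)
  qed
  obtain Cx where Cx: "0 \<le> Cx" "\<And>i j. cmod (x i j) \<le> Cx" using bdd_entry[OF x] by blast
  have p0: "p 0 = 0"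
  proof (rule ccontr)
    assume "p 0 \<noteq> 0"
    then have pp: "0 < p 0" using pnn[of 0] by simp
    define K where "K = ka + kb"
    define A where "A = (1 + real K) * (1 + real K + r)"
    show False
    proof (rule growth_gen[OF q1, of "\<lambda>n. s (Suc n)" A "\<lambda>n. p (Suc n) - p n" Cx])
      show "0 < s (Suc n)" for n by (rule spos)
      show "s (Suc n) \<le> A * (real n + 2)^2" for n
      proof -
        have "s (Suc n) \<le> (w (Suc n + ka) + w (Suc n + kb)) / 2" unfolding s_def by (rule amgm_sqrt) (use w_nonneg in auto)
        also have "\<dots> \<le> (w (Suc n + K) + w (Suc n + K)) / 2"
          unfolding K_def by (intro divide_right_mono add_mono w_mono) auto
        also have "\<dots> = w (Suc n + K)" by simp
        also have "\<dots> = real (Suc n + K) * (real (Suc n + K) + r - 1)" unfolding omega_def ..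
        also have "\<dots> \<le> ((1 + real K) * (real n + 2)) * ((1 + real K + r) * (real n + 2))"
          using r by (intro mult_mono) (auto simp: algebra_simps)
        also have "\<dots> = A * (real n + 2)^2" unfolding A_def by (simp add: power2_eq_square algebra_simps)
        finally show ?thesis .
      qed
      show "q * s (Suc n) * (p (Suc n) - p n) \<le> s (Suc (Suc n)) * (p (Suc (Suc n)) - p (Suc n))" for n
      proof -
        have "mu^2 * s (Suc n) * (p (Suc n) - p n) \<le> lam^2 * (s (Suc (Suc n)) * (p (Suc (Suc n)) - p (Suc n)))"
          using ind[of "Suc n"] by (simp add: algebra_simps)
        then show ?thesis unfolding q_def using l2 by (simp add: field_simps)
      qed
      show "0 < p (Suc 0) - p 0"
      proof -
        have wk: "0 < w (ka + kb)" using k(2) w_pos by simp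
        have "(lam^2 * s 1 + mu^2 * (w (ka + kb) / 2)) * p 0 \<le> cmod (C 0) * p 0"
          using Cb[of 0] s0 pnn[of 0] by (intro mult_right_mono) auto
        then have "lam^2 * s 1 * (p 1 - p 0) \<ge> mu^2 * (w (ka + kb) / 2) * p 0"
          using ineq[of 0] s0 by (simp add: algebra_simps)
        moreover have "0 < mu^2 * (w (ka + kb) / 2) * p 0" using wk pp mu by simp
        ultimately have AA: "0 < lam^2 * s 1 * (p 1 - p 0)" by linarith
        have BB: "0 < lam^2 * s 1" using spos[of 0] l2 by simp
        show ?thesis using zero_less_mult_pos[OF AA BB] by simp
      qed
      show "p (Suc n) - p n \<le> Cx" for n using Cx(2) pnn[of n] unfolding p_def X_def by (smt (verit))
    qed
  qed
  have X0: "X 0 = 0" using p0 unfolding p_def by simp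
  have "X n = 0 \<and> X (Suc n) = 0" for n
  proof (induction n)
    case 0
    have "complex_of_real (lam^2 * s 1) * X 1 = 0" using rel[of 0] X0 s0 by simp
    then show ?case using X0 spos[of 0] l2 by simp
  next
    case (Suc n)
    have "complex_of_real (lam^2 * s (Suc (Suc n))) * X (Suc (Suc n)) = 0" using rel[of "Suc n"] Suc by simp
    then show ?case using Suc spos[of "Suc n"] l2 by simp
  qed
  then show ?thesis unfolding X_def by blast
qed

lemma fixed_scalar:
  assumes x: "bdd_op x" and fx: "\<And>t. 0 \<le> t \<Longrightarrow> T t x = x"
  shows "x = (\<lambda>i j. x 0 0 * idm i j)"
proof (intro ext)
  fix i j
  show "x i j = x 0 0 * idm i j"
  proof (cases "i = j")
    case True then show ?thesis using fixed_diag[OF x fx] by (simp add: idm_def)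
  next
    case False
    show ?thesis
    proof (cases "i < j")
      case True
      then have "x (i + 0) (i + (j - i)) = 0" by (intro fixed_offdiag[OF x fx]) auto
      then show ?thesis using True by (simp add: idm_def)
    next
      case False
      with \<open>i \<noteq> j\<close> have "j < i" by simp
      then have "x (j + (i - j)) (j + 0) = 0" by (intro fixed_offdiag[OF x fx]) auto
      then show ?thesis using \<open>j < i\<close> by (simp add: idm_def)
    qed
  qed
qed

end

definition aR :: "real \<Rightarrow> real \<Rightarrow> real \<Rightarrow> nat \<Rightarrow> real" where
  "aR r lam mu n = lam^2 * omega r (Suc n) + mu^2 * omega r n"

lemma domG_l2: assumes "domG u" shows "l2 u"
  unfolding l2_def
proof (rule summable_comparison_test'[OF assms[unfolded domG_def], of 1])
  fix n :: nat assume "1 \<le> n"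
  then have "1 \<le> (real n)^4" by simp
  then have "1 * (cmod (u n))^2 \<le> (real n)^4 * (cmod (u n))^2" by (rule mult_right_mono) simp
  then have "(cmod (u n))^2 \<le> ((real n)^2 * cmod (u n))^2"
    by (simp add: power_mult_distrib power4_eq_xxxx power2_eq_square mult_ac)
  then show "norm ((cmod (u n))^2) \<le> ((real n)^2 * cmod (u n))^2" by simp
qed

lemma domG_4: assumes "domG u" shows "summable (\<lambda>n. (real (Suc n))^4 * (cmod (u n))^2)"
proof (rule summable_comparison_test'[of "\<lambda>n. 16 * ((real n)^2 * cmod (u n))^2" 1])
  show "summable (\<lambda>n. 16 * ((real n)^2 * cmod (u n))^2)"
    using assms unfolding domG_def by (rule summable_mult)
  fix n :: nat assume "1 \<le> n"
  then have "real (Suc n) \<le> 2 * real n" by simp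
  then have "(real (Suc n))^4 \<le> (2 * real n)^4" by (rule power_mono) simp
  then have "(real (Suc n))^4 * (cmod (u n))^2 \<le> (2 * real n)^4 * (cmod (u n))^2"
    by (rule mult_right_mono) simp
  then show "norm ((real (Suc n))^4 * (cmod (u n))^2) \<le> 16 * ((real n)^2 * cmod (u n))^2"
    by (simp add: power_mult_distrib power2_eq_square power4_eq_xxxx mult_ac)
qed

lemma aR_nonneg: "0 < r \<Longrightarrow> 0 \<le> aR r lam mu n"
  unfolding aR_def omega_def by (cases n) (auto intro!: add_nonneg_nonneg mult_nonneg_nonneg)

lemma aR_bound: assumes r: "0 < r" shows "aR r lam mu n \<le> ((lam^2 + mu^2) * (1 + r)) * (real (Suc n))^2"
proof -
  have w1: "omega r (Suc n) \<le> (1 + r) * (real (Suc n))^2"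
    unfolding omega_def using r by (simp add: power2_eq_square algebra_simps)
  have w0: "omega r n \<le> (1 + r) * (real (Suc n))^2"
  proof (cases n)
    case 0 then show ?thesis using r by (simp add: omega_def)
  next
    case (Suc k)
    have "omega r n \<le> omega r (Suc n)" unfolding omega_def using r Suc by (intro mult_mono) auto
    then show ?thesis using w1 by simp
  qed
  have "aR r lam mu n \<le> lam^2 * ((1 + r) * (real (Suc n))^2) + mu^2 * ((1 + r) * (real (Suc n))^2)"
    unfolding aR_def by (intro add_mono mult_left_mono w1 w0) auto
  then show ?thesis by (simp add: algebra_simps)
qed

lemma aR_summable:
  assumes r: "0 < r" and u: "domG u" and v: "domG v"
  shows "summable (\<lambda>m. aR r lam mu m * cmod (cnj (v m) * u m))"
proof -
  define K where "K = (lam^2 + mu^2) * (1 + r)"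
  have K0: "0 \<le> K" unfolding K_def using r by simp
  show ?thesis
  proof (rule summable_comparison_test[of _ "\<lambda>m. K * (((real (Suc m))^4 * (cmod (v m))^2 + (cmod (u m))^2) / 2)"])
    show "summable (\<lambda>m. K * (((real (Suc m))^4 * (cmod (v m))^2 + (cmod (u m))^2) / 2))"
      using domG_4[OF v] domG_l2[OF u] unfolding l2_def by (intro summable_mult summable_divide summable_add)
    show "\<exists>N. \<forall>n\<ge>N. norm (aR r lam mu n * cmod (cnj (v n) * u n)) \<le> K * (((real (Suc n))^4 * (cmod (v n))^2 + (cmod (u n))^2) / 2)"
    proof (intro exI allI impI)
      fix n :: nat
      have a: "norm (aR r lam mu n * cmod (cnj (v n) * u n)) = aR r lam mu n * (cmod (v n) * cmod (u n))"
        using aR_nonneg[OF r] by (simp add: norm_mult)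
      have "aR r lam mu n * (cmod (v n) * cmod (u n)) \<le> (K * (real (Suc n))^2) * (cmod (v n) * cmod (u n))"
        using aR_bound[OF r] unfolding K_def by (intro mult_right_mono) auto
      also have "\<dots> = K * (((real (Suc n))^2 * cmod (v n)) * cmod (u n))" by (simp add: algebra_simps)
      also have "\<dots> \<le> K * ((((real (Suc n))^2 * cmod (v n))^2 + (cmod (u n))^2) / 2)"
      proof (rule mult_left_mono[OF _ K0])
        have "0 \<le> ((real (Suc n))^2 * cmod (v n) - cmod (u n))^2" by simp
        then show "(real (Suc n))^2 * cmod (v n) * cmod (u n) \<le> (((real (Suc n))^2 * cmod (v n))^2 + (cmod (u n))^2) / 2"
          by (simp add: power2_diff)
      qed
      also have "\<dots> = K * (((real (Suc n))^4 * (cmod (v n))^2 + (cmod (u n))^2) / 2)"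
        by (simp add: power_mult_distrib power2_eq_square power4_eq_xxxx mult_ac)
      finally show "norm (aR r lam mu n * cmod (cnj (v n) * u n)) \<le> K * (((real (Suc n))^4 * (cmod (v n))^2 + (cmod (u n))^2) / 2)"
        using a by simp
    qed
  qed
qed


lemma cg_sum: "cnj (gdiag r lam mu zp zm n) + gdiag r lam mu zp zm n = complex_of_real (- aR r lam mu n)"
  unfolding gdiag_def aR_def by (simp add: complex_eq_iff)

lemma exp_pair: "cnj (exp (complex_of_real t * gdiag r lam mu zp zm n)) * exp (complex_of_real t * gdiag r lam mu zp zm n)
   = complex_of_real (exp (- t * aR r lam mu n))"
proof -
  have "cnj (exp (complex_of_real t * gdiag r lam mu zp zm n)) = exp (complex_of_real t * cnj (gdiag r lam mu zp zm n))"
    by (simp add: exp_cnj)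
  then have "cnj (exp (complex_of_real t * gdiag r lam mu zp zm n)) * exp (complex_of_real t * gdiag r lam mu zp zm n)
     = exp (complex_of_real t * (cnj (gdiag r lam mu zp zm n) + gdiag r lam mu zp zm n))"
    by (simp add: exp_add[symmetric] distrib_left)
  also have "\<dots> = exp (complex_of_real (- t * aR r lam mu n))" unfolding cg_sum by simp
  also have "\<dots> = complex_of_real (exp (- t * aR r lam mu n))" by (rule exp_of_real)
  finally show ?thesis .
qed

lemma cnj_prod3: "cnj (complex_of_real A * E * V) * (complex_of_real A * E * U) = complex_of_real (A^2) * (cnj E * E) * (cnj V * U)"
  by (simp add: mult_ac power2_eq_square)

lemma L1_Pt: "L1 r mu (Pt r lam mu zp zm t u) n = complex_of_real (mu * sqrt (omega r (Suc n))) * exp (complex_of_real t * gdiag r lam mu zp zm (Suc n)) * u (Suc n)"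
  unfolding L1_def annB_def Pt_def by (simp add: mult_ac)

lemma L2_Pt: "L2 r lam (Pt r lam mu zp zm t u) n = (case n of 0 \<Rightarrow> 0 | Suc m \<Rightarrow> complex_of_real (lam * sqrt (omega r n)) * exp (complex_of_real t * gdiag r lam mu zp zm m) * u m)"
  unfolding L2_def creB_def Pt_def by (simp add: mult_ac split: nat.splits)

lemma w_nonneg': "0 < r \<Longrightarrow> 0 \<le> omega r n"
  unfolding omega_def by (cases n) (auto intro!: mult_nonneg_nonneg)

lemma idm_sum_repr:
  assumes r: "0 < r" and u: "domG u" and v: "domG v" and t: "0 \<le> t"
  shows "ip (L1 r mu (Pt r lam mu zp zm t v)) (L1 r mu (Pt r lam mu zp zm t u))
       + ip (L2 r lam (Pt r lam mu zp zm t v)) (L2 r lam (Pt r lam mu zp zm t u))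
     = (\<Sum>m. complex_of_real (aR r lam mu m * exp (- t * aR r lam mu m)) * (cnj (v m) * u m))"
proof -
  define c where "c m = cnj (v m) * u m" for m
  define a where "a = aR r lam mu"
  define F where "F m = complex_of_real (mu^2 * omega r m * exp (- t * a m)) * c m" for m
  define H where "H m = complex_of_real (lam^2 * omega r (Suc m) * exp (- t * a m)) * c m" for m
  have wn: "0 \<le> omega r n" for n by (rule w_nonneg'[OF r])
  have sa: "summable (\<lambda>m. a m * cmod (c m))" unfolding a_def c_def by (rule aR_summable[OF r u v])
  have eF: "\<And>m. a m = lam^2 * omega r (Suc m) + mu^2 * omega r m" unfolding a_def aR_def by simp
  have an: "0 \<le> a m" for m unfolding a_def by (rule aR_nonneg[OF r])
  have ex1: "exp (- t * a m) \<le> 1" for m using t an[of m] by simp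
  have gen: "norm (complex_of_real (k * exp (- t * a m)) * c m) \<le> a m * cmod (c m)"
    if k: "0 \<le> k" "k \<le> a m" for k m
  proof -
    have "norm (complex_of_real (k * exp (- t * a m)) * c m) = (k * exp (- t * a m)) * cmod (c m)"
      using k by (simp add: norm_mult)
    also have "\<dots> \<le> a m * cmod (c m)"
    proof (rule mult_right_mono)
      have "k * exp (- t * a m) \<le> k * 1" by (rule mult_left_mono[OF ex1 k(1)])
      then show "k * exp (- t * a m) \<le> a m" using k(2) by simp
    qed simp
    finally show ?thesis .
  qed
  have sF: "summable F"
  proof (rule summable_comparison_test[OF _ sa], intro exI allI impI)
    fix m :: nat
    show "norm (F m) \<le> a m * cmod (c m)" unfolding F_def
      by (rule gen) (use wn[of m] eF[of m] wn[of "Suc m"] in \<open>auto intro: mult_nonneg_nonneg\<close>)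
  qed
  have sH: "summable H"
  proof (rule summable_comparison_test[OF _ sa], intro exI allI impI)
    fix m :: nat
    show "norm (H m) \<le> a m * cmod (c m)" unfolding H_def
      by (rule gen) (use wn[of m] eF[of m] wn[of "Suc m"] in \<open>auto intro: mult_nonneg_nonneg\<close>)
  qed
  have t1: "ip (L1 r mu (Pt r lam mu zp zm t v)) (L1 r mu (Pt r lam mu zp zm t u)) = (\<Sum>n. F (Suc n))"
  proof -
    have "cnj (L1 r mu (Pt r lam mu zp zm t v) n) * L1 r mu (Pt r lam mu zp zm t u) n = F (Suc n)" for n
      unfolding L1_Pt cnj_prod3 exp_pair F_def c_def a_def using wn[of "Suc n"]
      by (simp add: power_mult_distrib)
    then show ?thesis unfolding ip_def by simp
  qed
  have t2: "ip (L2 r lam (Pt r lam mu zp zm t v)) (L2 r lam (Pt r lam mu zp zm t u)) = (\<Sum>n. H n)"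
  proof -
    have e: "cnj (L2 r lam (Pt r lam mu zp zm t v) n) * L2 r lam (Pt r lam mu zp zm t u) n = (case n of 0 \<Rightarrow> 0 | Suc m \<Rightarrow> H m)" for n
    proof (cases n)
      case 0 then show ?thesis by (simp add: L2_Pt)
    next
      case (Suc m)
      then show ?thesis unfolding L2_Pt Suc nat.case cnj_prod3 exp_pair H_def c_def a_def using wn[of "Suc m"]
        by (simp add: power_mult_distrib)
    qed
    have "(\<lambda>n. case n of 0 \<Rightarrow> 0 | Suc m \<Rightarrow> H m) sums (\<Sum>n. H n)"
    proof -
      have "(\<lambda>n. (case n of 0 \<Rightarrow> 0 | Suc m \<Rightarrow> H m)) = (\<lambda>n. if n = 0 then 0 else H (n - 1))"
        by (auto split: nat.splits)
      moreover have "(\<lambda>n. H n) sums (\<Sum>n. H n)" using sH by (rule summable_sums)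
      then have "(\<lambda>n. if n = 0 then 0 else H (n - 1)) sums (\<Sum>n. H n)"
        using sums_Suc_iff[of "\<lambda>n. if n = 0 then 0 else H (n - 1)"] by simp
      ultimately show ?thesis by simp
    qed
    then show ?thesis unfolding ip_def e by (simp add: sums_iff)
  qed
  have F0: "F 0 = 0" unfolding F_def by (simp add: omega0)
  have "(\<Sum>n. F (Suc n)) = (\<Sum>n. F n)" using suminf_split_head[OF sF] F0 by simp
  then have "ip (L1 r mu (Pt r lam mu zp zm t v)) (L1 r mu (Pt r lam mu zp zm t u))
       + ip (L2 r lam (Pt r lam mu zp zm t v)) (L2 r lam (Pt r lam mu zp zm t u)) = (\<Sum>n. F n + H n)"
    unfolding t1 t2 using suminf_add[OF sF sH] by simp
  also have "(\<lambda>n. F n + H n) = (\<lambda>m. complex_of_real (aR r lam mu m * exp (- t * aR r lam mu m)) * (cnj (v m) * u m))"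
    unfolding F_def H_def c_def a_def aR_def by (auto simp: algebra_simps)
  finally show ?thesis .
qed


lemma exp_deriv_aux:
  "((\<lambda>s. complex_of_real (exp (- (t - s) * a)) * c) has_vector_derivative
     (complex_of_real (a * exp (- (t - s) * a)) * c)) (at s within S)"
proof -
  have "((\<lambda>s. exp (- (t - s) * a)) has_real_derivative (exp (- (t - s) * a) * a)) (at s within S)"
    by (auto intro!: derivative_eq_intros)
  then have "((\<lambda>s. complex_of_real (exp (- (t - s) * a))) has_vector_derivative complex_of_real (exp (- (t - s) * a) * a)) (at s within S)"
    by (rule has_vector_derivative_of_real)
  then have "((\<lambda>s. complex_of_real (exp (- (t - s) * a)) * c) has_vector_derivative complex_of_real (exp (- (t - s) * a) * a) * c) (at s within S)"
    by (rule has_vector_derivative_mult_left)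
  then show ?thesis by (simp add: mult.commute)
qed

lemma idm_integral:
  assumes r: "0 < r" and u: "domG u" and v: "domG v" and t: "0 \<le> t"
  shows "((\<lambda>s. \<Sum>m. complex_of_real (aR r lam mu m * exp (- (t - s) * aR r lam mu m)) * (cnj (v m) * u m))
     has_integral (\<Sum>m. (cnj (v m) * u m) * complex_of_real (1 - exp (- t * aR r lam mu m)))) {0..t}"
proof -
  define c where "c m = cnj (v m) * u m" for m
  define a where "a = aR r lam mu"
  define phi where "phi m s = complex_of_real (a m * exp (- (t - s) * a m)) * c m" for m s
  have an: "0 \<le> a m" for m unfolding a_def by (rule aR_nonneg[OF r])
  have sa: "summable (\<lambda>m. a m * cmod (c m))" unfolding a_def c_def by (rule aR_summable[OF r u v])
  have bound: "norm (phi m s) \<le> a m * cmod (c m)" if "s \<in> {0..t}" for m s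
  proof -
    have "0 \<le> (t - s) * a m" using that an[of m] by (simp add: mult_nonneg_nonneg)
    then have e1: "exp (- (t - s) * a m) \<le> 1" by (simp add: algebra_simps)
    have "norm (phi m s) = (a m * exp (- (t - s) * a m)) * cmod (c m)"
      unfolding phi_def using an[of m] by (simp add: norm_mult)
    also have "\<dots> \<le> (a m * 1) * cmod (c m)"
      by (intro mult_right_mono mult_left_mono e1 an) auto
    finally show ?thesis by simp
  qed
  have U: "uniform_limit {0..t} (\<lambda>N s. \<Sum>m<N. phi m s) (\<lambda>s. \<Sum>m. phi m s) sequentially"
    by (rule Weierstrass_m_test[OF bound sa])
  have C: "continuous_on {0..t} (\<lambda>s. \<Sum>m<N. phi m s)" for N
    unfolding phi_def by (intro continuous_intros)
  have Im: "(phi m has_integral (c m * complex_of_real (1 - exp (- t * a m)))) {0..t}" for m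
  proof -
    have "(phi m has_integral (complex_of_real (exp (- (t - t) * a m)) * c m - complex_of_real (exp (- (t - 0) * a m)) * c m)) {0..t}"
      unfolding phi_def by (rule fundamental_theorem_of_calculus[OF t exp_deriv_aux])
    then show ?thesis by (simp add: algebra_simps)
  qed
  have IN: "((\<lambda>s. \<Sum>m<N. phi m s) has_integral (\<Sum>m<N. c m * complex_of_real (1 - exp (- t * a m)))) {0..t}" for N
    by (rule has_integral_sum) (simp, rule Im)
  have sc: "summable (\<lambda>m. c m * complex_of_real (1 - exp (- t * a m)))"
  proof (rule summable_comparison_test[OF _ ip_summable_abs[OF domG_l2[OF u] domG_l2[OF v]]], intro exI allI impI)
    fix m :: nat
    have "0 \<le> 1 - exp (- t * a m)" "1 - exp (- t * a m) \<le> 1" using t an[of m] by (auto simp: mult_nonneg_nonneg)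
    then have n1: "norm (complex_of_real (1 - exp (- t * a m))) \<le> 1"
      unfolding norm_of_real by linarith
    have "norm (c m * complex_of_real (1 - exp (- t * a m))) = norm (c m) * norm (complex_of_real (1 - exp (- t * a m)))"
      by (rule norm_mult)
    also have "\<dots> \<le> norm (c m)" by (rule mult_left_le[OF n1]) simp
    finally show "norm (c m * complex_of_real (1 - exp (- t * a m))) \<le> cmod (cnj (v m) * u m)"
      unfolding c_def by simp
  qed
  obtain I J where I: "\<And>N. ((\<lambda>s. \<Sum>m<N. phi m s) has_integral I N) {0..t}"
    and J: "((\<lambda>s. \<Sum>m. phi m s) has_integral J) {0..t}" and IJ: "I \<longlonglongrightarrow> J"
    by (rule uniform_limit_integral[OF U C]) auto
  have "I N = (\<Sum>m<N. c m * complex_of_real (1 - exp (- t * a m)))" for N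
    using I[of N] IN[of N] by (rule has_integral_unique)
  then have Ieq: "I = (\<lambda>N. \<Sum>m<N. c m * complex_of_real (1 - exp (- t * a m)))" by (rule ext)
  have "I \<longlonglongrightarrow> (\<Sum>m. c m * complex_of_real (1 - exp (- t * a m)))"
    unfolding Ieq by (rule summable_LIMSEQ[OF sc])
  then have "J = (\<Sum>m. c m * complex_of_real (1 - exp (- t * a m)))" using IJ LIMSEQ_unique by blast
  with J show ?thesis unfolding phi_def c_def a_def by simp
qed

lemma idm_qds:
  assumes r: "0 < r" and u: "domG u" and v: "domG v" and t: "0 \<le> t"
  shows "((\<lambda>s. ip (L1 r mu (Pt r lam mu zp zm (t - s) v)) (app idm (L1 r mu (Pt r lam mu zp zm (t - s) u)))
            + ip (L2 r lam (Pt r lam mu zp zm (t - s) v)) (app idm (L2 r lam (Pt r lam mu zp zm (t - s) u))))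
         has_integral
           (ip v (app idm u) - ip (Pt r lam mu zp zm t v) (app idm (Pt r lam mu zp zm t u)))) {0..t}"
proof -
  define c where "c m = cnj (v m) * u m" for m
  define a where "a = aR r lam mu"
  have lu: "l2 u" "l2 v" using domG_l2 u v by auto
  have rhs: "ip v u - ip (Pt r lam mu zp zm t v) (Pt r lam mu zp zm t u) = (\<Sum>m. c m * complex_of_real (1 - exp (- t * a m)))"
  proof -
    have e: "cnj (Pt r lam mu zp zm t v m) * Pt r lam mu zp zm t u m = complex_of_real (exp (- t * a m)) * c m" for m
      unfolding Pt_def c_def a_def using exp_pair[of t r lam mu zp zm m] by (simp add: mult_ac)
    have s1: "(\<lambda>m. c m) sums ip v u" unfolding c_def by (rule ip_sums[OF lu])
    have s2: "(\<lambda>m. complex_of_real (exp (- t * a m)) * c m) sums ip (Pt r lam mu zp zm t v) (Pt r lam mu zp zm t u)"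
    proof -
      have "summable (\<lambda>m. complex_of_real (exp (- t * a m)) * c m)"
      proof (rule summable_comparison_test[OF _ ip_summable_abs[OF lu]], intro exI allI impI)
        fix m :: nat
        have "0 \<le> a m" unfolding a_def by (rule aR_nonneg[OF r])
        then have "exp (- t * a m) \<le> 1" using t by (simp add: mult_nonneg_nonneg)
        then show "norm (complex_of_real (exp (- t * a m)) * c m) \<le> cmod (cnj (v m) * u m)"
          unfolding c_def by (simp add: norm_mult mult_left_le_one_le)
      qed
      then show ?thesis unfolding ip_def e[symmetric] by (rule summable_sums)
    qed
    have "(\<lambda>m. c m - complex_of_real (exp (- t * a m)) * c m) sums (ip v u - ip (Pt r lam mu zp zm t v) (Pt r lam mu zp zm t u))"
      by (rule sums_diff[OF s1 s2])
    then show ?thesis by (simp add: sums_iff algebra_simps)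
  qed
  have "((\<lambda>s. \<Sum>m. complex_of_real (aR r lam mu m * exp (- (t - s) * aR r lam mu m)) * (cnj (v m) * u m))
     has_integral (\<Sum>m. (cnj (v m) * u m) * complex_of_real (1 - exp (- t * aR r lam mu m)))) {0..t}"
    by (rule idm_integral[OF r u v t])
  then have "((\<lambda>s. ip (L1 r mu (Pt r lam mu zp zm (t - s) v)) (L1 r mu (Pt r lam mu zp zm (t - s) u))
            + ip (L2 r lam (Pt r lam mu zp zm (t - s) v)) (L2 r lam (Pt r lam mu zp zm (t - s) u)))
     has_integral (\<Sum>m. (cnj (v m) * u m) * complex_of_real (1 - exp (- t * aR r lam mu m)))) {0..t}"
  proof (rule has_integral_eq[rotated])
    fix s assume "s \<in> {0..t}"
    then have "0 \<le> t - s" by simp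
    then show "(\<Sum>m. complex_of_real (aR r lam mu m * exp (- (t - s) * aR r lam mu m)) * (cnj (v m) * u m)) =
      ip (L1 r mu (Pt r lam mu zp zm (t - s) v)) (L1 r mu (Pt r lam mu zp zm (t - s) u))
            + ip (L2 r lam (Pt r lam mu zp zm (t - s) v)) (L2 r lam (Pt r lam mu zp zm (t - s) u))"
      using idm_sum_repr[OF r u v, of "t - s"] by simp
  qed
  then show ?thesis unfolding app_idm rhs c_def a_def by simp
qed


lemma nonneg_cancel: "0 < (a::real) \<Longrightarrow> 0 \<le> a * b \<Longrightarrow> 0 \<le> b"
  by (simp add: zero_le_mult_iff)

context qs begin

lemma w_poly: "w (Suc n + K) \<le> ((1 + real K) * (1 + real K + r)) * (real n + 2)^2"
proof -
  have "w (Suc n + K) = real (Suc n + K) * (real (Suc n + K) + r - 1)" unfolding omega_def ..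
  also have "\<dots> \<le> ((1 + real K) * (real n + 2)) * ((1 + real K + r) * (real n + 2))"
    using r by (intro mult_mono) (auto simp: algebra_simps)
  also have "\<dots> = ((1 + real K) * (1 + real K + r)) * (real n + 2)^2" by (simp add: power2_eq_square algebra_simps)
  finally show ?thesis .
qed

definition "Sidm t y = (if y = idm then idm else T t y)"

lemma Sidm_sol: "qds_solution r lam mu zp zm Sidm"
  unfolding qds_solution_def
proof (intro conjI allI impI)
  fix t :: real and x :: mat assume "0 \<le> t" "bdd_op x"
  then show "bdd_op (Sidm t x)" unfolding Sidm_def using T_bdd bdd_idm by auto
next
  fix t :: real and x :: mat assume "0 \<le> t" "positive_op x"
  then show "positive_op (Sidm t x)" unfolding Sidm_def using T_pos pos_idm by auto
next
  show "qds_eq r lam mu zp zm Sidm"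
    unfolding qds_eq_def
  proof (intro allI impI)
    fix t :: real and x :: mat and u v :: vec assume t: "0 \<le> t" and x: "bdd_op x" and u: "domG u" and v: "domG v"
    show "((\<lambda>s. ip (L1 r mu (Pt r lam mu zp zm (t - s) v)) (app (Sidm s x) (L1 r mu (Pt r lam mu zp zm (t - s) u)))
            + ip (L2 r lam (Pt r lam mu zp zm (t - s) v)) (app (Sidm s x) (L2 r lam (Pt r lam mu zp zm (t - s) u))))
         has_integral (ip v (app (Sidm t x) u) - ip (Pt r lam mu zp zm t v) (app x (Pt r lam mu zp zm t u)))) {0..t}"
    proof (cases "x = idm")
      case True
      then show ?thesis unfolding Sidm_def using idm_qds[OF r u v t] by simp
    next
      case False
      then show ?thesis unfolding Sidm_def using T_eq t x u v unfolding qds_eq_def by simp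
    qed
  qed
qed

lemma T_le_idm: "0 \<le> t \<Longrightarrow> positive_op (\<lambda>i j. idm i j - T t idm i j)"
  using T_min[OF Sidm_sol _ pos_idm, of t] unfolding op_le_def Sidm_def by simp

lemma Tidm_diag: assumes "0 \<le> s"
  shows "Im (T s idm i i) = 0" "0 \<le> Re (T s idm i i)" "Re (T s idm i i) \<le> 1"
proof -
  show "Im (T s idm i i) = 0" "0 \<le> Re (T s idm i i)" using pos_diag[OF T_pos[OF assms pos_idm]] by auto
  show "Re (T s idm i i) \<le> 1" using pos_diag(2)[OF T_le_idm[OF assms], of i] by (simp add: idm_def)
qed

lemma sqw2: "sqrt (w i) * (sqrt (w i) * z) = w i * z"
  using sqw[of i] by (simp add: mult.assoc[symmetric])

definition "ee i s = 1 - Re (T s idm i i)"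

lemma ee_cont: "continuous_on {0..t} (ee i)"
  unfolding ee_def by (intro continuous_intros entry_cont bdd_idm)

lemma ee_rel:
  assumes t: "0 \<le> t"
  shows "((\<lambda>s. aR r lam mu i * ee i s - mu^2 * w i * ee (i - 1) s - lam^2 * w (Suc i) * ee (Suc i) s) has_integral (- ee i t)) {0..t}"
proof -
  have "((\<lambda>s. Re (cc i i * T s idm i i + Kc idm s i i)) has_integral Re (T t idm i i - idm i i)) {0..t}"
    by (rule has_integral_Re[OF entry_strong[OF bdd_idm t]])
  moreover have "Re (cc i i * T s idm i i + Kc idm s i i) = aR r lam mu i * ee i s - mu^2 * w i * ee (i - 1) s - lam^2 * w (Suc i) * ee (Suc i) s" for s
    unfolding cc_diag Kc_def ee_def aR_def by (simp add: sqw sqw2 algebra_simps)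
  moreover have "Re (T t idm i i - idm i i) = - ee i t" unfolding ee_def idm_def by simp
  ultimately show ?thesis by simp
qed

lemma Tidm_diag_one: assumes t: "0 \<le> t" shows "T t idm i i = 1"
proof -
  define E where "E i = integral {0..t} (ee i)" for i
  have Ei: "(ee i has_integral E i) {0..t}" for i
    unfolding E_def using ee_cont integrable_continuous_real by blast
  have eb: "0 \<le> ee i s" "ee i s \<le> 1" if "s \<in> {0..t}" for i s
    using Tidm_diag[of s i] that unfolding ee_def by auto
  have Eb: "0 \<le> E i" "E i \<le> t" for i
  proof -
    show "0 \<le> E i" by (rule has_integral_nonneg[OF Ei]) (use eb in auto)
    have "((\<lambda>s. 1::real) has_integral t) {0..t}" using has_integral_const_real[of "1::real" 0 t] t by simp
    then show "E i \<le> t" by (rule has_integral_le[OF Ei]) (use eb in auto)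
  qed
  have rel: "aR r lam mu i * E i - mu^2 * w i * E (i - 1) - lam^2 * w (Suc i) * E (Suc i) = - ee i t" for i
  proof -
    have "((\<lambda>s. aR r lam mu i * ee i s - mu^2 * w i * ee (i - 1) s - lam^2 * w (Suc i) * ee (Suc i) s) has_integral
        (aR r lam mu i * E i - mu^2 * w i * E (i - 1) - lam^2 * w (Suc i) * E (Suc i))) {0..t}"
      by (intro has_integral_diff has_integral_mult_right Ei)
    then show ?thesis using ee_rel[OF t, of i] by (rule has_integral_unique)
  qed
  define D where "D i = E (Suc i) - E i" for i
  have l2: "0 < lam^2" using lam by simp
  have Drel: "lam^2 * w (Suc i) * D i = ee i t + mu^2 * w i * D (i - 1)" for i
  proof (cases i)
    case 0 then show ?thesis using rel[of 0] unfolding D_def aR_def by (simp add: omega0 algebra_simps)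
  next
    case (Suc k) then show ?thesis using rel[of i] unfolding D_def aR_def by (simp add: algebra_simps)
  qed
  have eet: "0 \<le> ee i t" for i using eb[of t i] t by simp
  have Dnn: "0 \<le> D i" for i
  proof (induction i)
    case 0
    have "0 \<le> lam^2 * w 1 * D 0" using Drel[of 0] eet[of 0] by (simp add: omega0)
    moreover have "0 < lam^2 * w 1" using l2 w_pos[of 1] by simp
    ultimately show ?case using nonneg_cancel by blast
  next
    case (Suc i)
    have "0 \<le> mu^2 * w (Suc i) * D i" using Suc w_nonneg by simp
    then have "0 \<le> lam^2 * w (Suc (Suc i)) * D (Suc i)" using Drel[of "Suc i"] eet[of "Suc i"] by simp
    moreover have "0 < lam^2 * w (Suc (Suc i))" using l2 w_pos[of "Suc (Suc i)"] by simp
    ultimately show ?case using nonneg_cancel by blast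
  qed
  have D0: "D k = 0" for k
  proof (rule ccontr)
    assume "D k \<noteq> 0"
    then have Dk: "0 < D k" using Dnn[of k] by simp
    define q where "q = mu^2 / lam^2"
    have q1: "1 < q" unfolding q_def using lam lm by (simp add: power_strict_mono)
    show False
    proof (rule growth_gen[OF q1, of "\<lambda>n. w (Suc n + k)" "(1 + real k) * (1 + real k + r)" "\<lambda>n. D (n + k)" t])
      show "0 < w (Suc n + k)" for n by (rule w_pos) simp
      show "w (Suc n + k) \<le> (1 + real k) * (1 + real k + r) * (real n + 2)^2" for n by (rule w_poly)
      show "q * w (Suc n + k) * D (n + k) \<le> w (Suc (Suc n) + k) * D (Suc n + k)" for n
      proof -
        have "mu^2 * w (Suc (n + k)) * D (n + k) \<le> lam^2 * w (Suc (Suc (n + k))) * D (Suc (n + k))"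
          using Drel[of "Suc (n + k)"] eet[of "Suc (n + k)"] by simp
        then show ?thesis unfolding q_def using l2 by (simp add: field_simps)
      qed
      show "0 < D (0 + k)" using Dk by simp
      show "D (n + k) \<le> t" for n unfolding D_def using Eb[of "n + k"] Eb[of "Suc (n + k)"] by simp
    qed
  qed
  have "ee i t = 0" using Drel[of i] D0 by simp
  then have "Re (T t idm i i) = 1" unfolding ee_def by simp
  moreover have "Im (T t idm i i) = 0" using Tidm_diag[OF t] by simp
  ultimately show ?thesis by (simp add: complex_eq_iff)
qed

lemma T_idm: assumes t: "0 \<le> t" shows "T t idm = idm"
proof (intro ext)
  fix i j
  have "(\<lambda>i j. idm i j - T t idm i j) i j = 0"
  proof (rule pos_zero_diag[OF T_le_idm[OF t]])
    show "idm i i - T t idm i i = 0" using Tidm_diag_one[OF t, of i] by (simp add: idm_def)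
  qed
  then show "T t idm i j = idm i j" by simp
qed

end

lemma adj_adj: "adj (adj x) = x" unfolding adj_def by simp

context qs begin

lemma T_herm:
  assumes h: "bdd_op h" and ha: "adj h = h" and t: "0 \<le> t"
  shows "T t h j i = cnj (T t h i j)"
proof -
  obtain c where p: "positive_op (\<lambda>i j. complex_of_real c * idm i j + h i j)"
    and q: "positive_op (\<lambda>i j. complex_of_real c * idm i j + 0 * idm i j)"
    using pos_shift[OF h ha] by blast
  define P where "P = (\<lambda>i j. complex_of_real c * idm i j + h i j)"
  define Q where "Q = (\<lambda>i j. complex_of_real c * idm i j + 0 * idm i j)"
  have bP: "bdd_op P" and bQ: "bdd_op Q" using p q unfolding positive_op_def P_def Q_def by auto
  have hPQ: "h = (\<lambda>i j. 1 * P i j + (-1) * Q i j)" unfolding P_def Q_def by (auto simp: algebra_simps)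
  have Th: "T t h = (\<lambda>i j. 1 * T t P i j + (-1) * T t Q i j)"
    unfolding hPQ by (rule T_lin[OF t bP bQ])
  have "T t P j i = cnj (T t P i j)" by (rule pos_herm[OF T_pos[OF t p[folded P_def]]])
  moreover have "T t Q j i = cnj (T t Q i j)" by (rule pos_herm[OF T_pos[OF t q[folded Q_def]]])
  ultimately show ?thesis unfolding Th by simp
qed

lemma T_adj:
  assumes x: "bdd_op x" and t: "0 \<le> t"
  shows "T t (adj x) = adj (T t x)"
proof -
  define h1 where "h1 = (\<lambda>i j. (1/2) * x i j + (1/2) * adj x i j)"
  define h2 where "h2 = (\<lambda>i j. (1/(2*\<i>)) * x i j + (- 1/(2*\<i>)) * adj x i j)"
  have ax: "bdd_op (adj x)" by (rule bdd_adj[OF x])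
  have b1: "bdd_op h1" unfolding h1_def by (rule bdd_lin[OF x ax])
  have b2: "bdd_op h2" unfolding h2_def by (rule bdd_lin[OF x ax])
  have a1: "adj h1 = h1" unfolding h1_def adj_def by (auto simp: algebra_simps)
  have a2: "adj h2 = h2" unfolding h2_def adj_def by (auto simp: fun_eq_iff field_simps)
  have ex: "x = (\<lambda>i j. 1 * h1 i j + \<i> * h2 i j)" unfolding h1_def h2_def by (auto simp: field_simps)
  have eax: "adj x = (\<lambda>i j. 1 * h1 i j + (- \<i>) * h2 i j)" unfolding h1_def h2_def adj_def by (auto simp: field_simps)
  have T1: "T t x = (\<lambda>i j. 1 * T t h1 i j + \<i> * T t h2 i j)"
    by (subst ex) (rule T_lin[OF t b1 b2])
  have T2: "T t (adj x) = (\<lambda>i j. 1 * T t h1 i j + (- \<i>) * T t h2 i j)"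
    by (subst eax) (rule T_lin[OF t b1 b2])
  show ?thesis unfolding T2 T1
    apply (intro ext)
    subgoal for i j unfolding adj_def using T_herm[OF b1 a1 t, of j i] T_herm[OF b2 a2 t, of j i] by simp
    done
qed

lemma T_scalar: "0 \<le> t \<Longrightarrow> T t (\<lambda>i j. c * idm i j) = (\<lambda>i j. c * idm i j)"
  using T_lin[OF _ bdd_idm bdd_idm, of t c 0] T_idm by simp

lemma bdd_scalar: "bdd_op (\<lambda>i j. c * idm i j)"
  using bdd_lin[OF bdd_idm bdd_idm, of c 0] by simp

lemma mmult_scalar: "mmult (\<lambda>i j. a * idm i j) (\<lambda>i j. b * idm i j) = (\<lambda>i j. (a * b) * idm i j)"
proof (intro ext)
  fix i j
  have "(\<lambda>k. a * idm i k * (b * idm k j)) = (\<lambda>k. if k = i then a * (b * idm i j) else 0)"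
    by (auto simp: idm_def)
  then show "mmult (\<lambda>i j. a * idm i j) (\<lambda>i j. b * idm i j) i j = (a * b) * idm i j"
    unfolding mmult_def using sums_single[of i "\<lambda>_. a * (b * idm i j)"] by (simp add: sums_iff)
qed

lemma adj_scalar: "adj (\<lambda>i j. c * idm i j) = (\<lambda>i j. cnj c * idm i j)"
  unfolding adj_def idm_def by (auto simp: fun_eq_iff)

lemma scalars_fixed: "scalars \<subseteq> fixed_pts T"
  unfolding scalars_def fixed_pts_def using bdd_scalar T_scalar by auto

lemma scalars_dec: "scalars \<subseteq> dec_free T"
  unfolding scalars_def dec_free_def
  using bdd_scalar T_scalar by (auto simp: adj_scalar mmult_scalar)

lemma fixed_scalars: "fixed_pts T \<subseteq> scalars"
  unfolding scalars_def fixed_pts_def using fixed_scalar by blast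

end

lemma sq_int:
  fixes f g :: "real \<Rightarrow> complex"
  assumes T: "0 \<le> T" and gc: "continuous_on {0..T} g"
    and fi: "\<And>t. t \<in> {0..T} \<Longrightarrow> (g has_integral (f t - f 0)) {0..t}"
  shows "((\<lambda>s. 2 * Re (cnj (f s) * g s)) has_integral ((cmod (f T))^2 - (cmod (f 0))^2)) {0..T}"
proof -
  define F where "F t = f 0 + integral {0..t} g" for t
  have fF: "f t = F t" if "t \<in> {0..T}" for t
    using integral_unique[OF fi[OF that]] unfolding F_def by simp
  have D: "(F has_vector_derivative g t) (at t within {0..T})" if "t \<in> {0..T}" for t
    unfolding F_def
    using has_vector_derivative_add[OF has_vector_derivative_const integral_has_vector_derivative[OF gc that]]
    by simp
  have D2: "((\<lambda>s. F s * cnj (F s)) has_vector_derivative (F t * cnj (g t) + g t * cnj (F t))) (at t within {0..T})"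
    if "t \<in> {0..T}" for t
    by (rule has_vector_derivative_mult[OF D[OF that] has_vector_derivative_cnj[OF D[OF that]]])
  have "((\<lambda>t. F t * cnj (g t) + g t * cnj (F t)) has_integral (F T * cnj (F T) - F 0 * cnj (F 0))) {0..T}"
    by (rule fundamental_theorem_of_calculus[OF T D2])
  then have I: "((\<lambda>t. Re (F t * cnj (g t) + g t * cnj (F t))) has_integral Re (F T * cnj (F T) - F 0 * cnj (F 0))) {0..T}"
    by (rule has_integral_Re)
  have e1: "Re (F t * cnj (g t) + g t * cnj (F t)) = 2 * Re (cnj (f t) * g t)" if "t \<in> {0..T}" for t
    using fF[OF that] by simp
  have e2: "Re (F T * cnj (F T) - F 0 * cnj (F 0)) = (cmod (f T))^2 - (cmod (f 0))^2"
    using fF[of T] fF[of 0] T by (simp add: complex_mult_cnj cmod_power2)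
  have "((\<lambda>t. 2 * Re (cnj (f t) * g t)) has_integral Re (F T * cnj (F T) - F 0 * cnj (F 0))) {0..T}"
    by (rule has_integral_eq[OF _ I]) (rule e1)
  then show ?thesis unfolding e2 .
qed


lemma Re_mult_ofr: "Re (z * complex_of_real a) = Re z * a"
  by simp

locale dq = qs +
  fixes x :: mat
  assumes xb: "bdd_op x"
    and xd: "\<And>t. 0 \<le> t \<Longrightarrow> T t (mmult (adj x) x) = mmult (T t (adj x)) (T t x)"
begin

abbreviation "y s k m \<equiv> T s x k m"
definition "PP = mmult (adj x) x"
definition "Z m s = (\<Sum>k. (cmod (y s k m))^2)"

lemma bPP: "bdd_op PP" unfolding PP_def by (rule bdd_mmult[OF bdd_adj[OF xb] xb])

lemma Zsum: "0 \<le> s \<Longrightarrow> (\<lambda>k. (cmod (y s k m))^2) sums Z m s"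
  unfolding Z_def using bdd_col_l2[OF T_bdd[OF _ xb]] unfolding l2_def by (blast intro: summable_sums)

lemma Zz: assumes s: "0 \<le> s" shows "T s PP m m = complex_of_real (Z m s)"
proof -
  have "T s PP m m = mmult (adj (T s x)) (T s x) m m" unfolding PP_def xd[OF s] T_adj[OF xb s] ..
  also have "\<dots> = (\<Sum>k. complex_of_real ((cmod (y s k m))^2))"
    unfolding mmult_def adj_def by (simp add: cnj_mult_self)
  also have "\<dots> = complex_of_real (Z m s)"
  proof -
    have "(\<lambda>k. complex_of_real ((cmod (y s k m))^2)) sums complex_of_real (Z m s)"
      by (rule sums_of_real[OF Zsum[OF s]])
    then show ?thesis by (simp add: sums_iff)
  qed
  finally show ?thesis .
qed

lemma Z_nonneg: "0 \<le> s \<Longrightarrow> 0 \<le> Z m s"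
  using Zsum sums_le[of "\<lambda>_. 0" "\<lambda>k. (cmod (y s k m))^2" 0] by fastforce

lemma Zcont: "continuous_on {0..t} (Z m)"
proof -
  have "continuous_on {0..t} (\<lambda>s. Re (T s PP m m))" by (intro continuous_intros entry_cont bPP)
  then show ?thesis by (rule continuous_on_eq) (auto simp: Zz)
qed

lemma E2: assumes t: "0 \<le> t"
  shows "((\<lambda>s. - aR r lam mu m * Z m s + mu^2 * w m * Z (m - 1) s + lam^2 * w (Suc m) * Z (Suc m) s)
     has_integral (Z m t - Z m 0)) {0..t}"
proof -
  have I: "((\<lambda>s. Re (cc m m * T s PP m m + Kc PP s m m)) has_integral Re (T t PP m m - T 0 PP m m)) {0..t}"
    using has_integral_Re[OF entry_strong[OF bPP t]] T0_entry[OF bPP] by simp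
  have "((\<lambda>s. - aR r lam mu m * Z m s + mu^2 * w m * Z (m - 1) s + lam^2 * w (Suc m) * Z (Suc m) s)
     has_integral Re (T t PP m m - T 0 PP m m)) {0..t}"
  proof (rule has_integral_eq[OF _ I])
    fix s assume "s \<in> {0..t}"
    then have s: "0 \<le> s" by simp
    show "Re (cc m m * T s PP m m + Kc PP s m m) = - aR r lam mu m * Z m s + mu^2 * w m * Z (m - 1) s + lam^2 * w (Suc m) * Z (Suc m) s"
      unfolding cc_diag Kc_def Zz[OF s] aR_def by (simp add: sqw sqw2 algebra_simps)
  qed
  then show ?thesis using Zz[OF t] Zz[of 0] by simp
qed

lemma ycont: "continuous_on {0..t} (\<lambda>s. y s k m)" by (rule entry_cont[OF xb])

lemma E3: assumes t: "0 \<le> t"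
  shows "((\<lambda>s. - (aR r lam mu k + aR r lam mu m) * (cmod (y s k m))^2 + 2 * Re (cnj (y s k m) * Kc x s k m))
     has_integral ((cmod (y t k m))^2 - (cmod (x k m))^2)) {0..t}"
proof -
  have gc: "continuous_on {0..t} (\<lambda>s. cc k m * y s k m + Kc x s k m)"
    by (intro continuous_intros ycont Kc_cont xb)
  have fi: "((\<lambda>s. cc k m * y s k m + Kc x s k m) has_integral (y t' k m - y 0 k m)) {0..t'}" if "t' \<in> {0..t}" for t'
    using entry_strong[OF xb, of t' k m] that T0_entry[OF xb] by simp
  have I: "((\<lambda>s. 2 * Re (cnj (y s k m) * (cc k m * y s k m + Kc x s k m))) has_integral ((cmod (y t k m))^2 - (cmod (y 0 k m))^2)) {0..t}"
    by (rule sq_int[OF t gc fi])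
  have e: "2 * Re (cnj (y s k m) * (cc k m * y s k m + Kc x s k m)) = - (aR r lam mu k + aR r lam mu m) * (cmod (y s k m))^2 + 2 * Re (cnj (y s k m) * Kc x s k m)" for s
  proof -
    have "cnj (y s k m) * (cc k m * y s k m) = cc k m * (cnj (y s k m) * y s k m)"
      by (simp add: mult_ac)
    also have "\<dots> = cc k m * complex_of_real ((cmod (y s k m))^2)" unfolding cnj_mult_self ..
    finally have "cnj (y s k m) * (cc k m * y s k m) = cc k m * complex_of_real ((cmod (y s k m))^2)" .
    then have "Re (cnj (y s k m) * (cc k m * y s k m)) = Re (cc k m) * (cmod (y s k m))^2"
      by (simp only: Re_mult_ofr)
    then show ?thesis unfolding distrib_left Re_cc aR_def by (simp add: algebra_simps)
  qed
  show ?thesis using I unfolding e T0_entry[OF xb] by simp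
qed

end

lemma step_alg:
  fixes Y0 Y1 Y2 ym0 ym1 yp0 yp2 :: complex and sK sK1 sn sn1 m2 l2 :: real
  shows "m2 * (cmod (complex_of_real sK1 * Y2 - complex_of_real sn * ym1))^2 + l2 * (cmod (complex_of_real sK * Y0 - complex_of_real sn1 * yp0))^2
  = m2 * sn^2 * (cmod ym1)^2 + l2 * sn1^2 * (cmod yp0)^2 + (m2 * sK^2 + l2 * sK1^2) * (cmod Y1)^2
    - 2 * Re (cnj Y1 * (complex_of_real (m2 * sK * sn) * ym0 + complex_of_real (l2 * sK1 * sn1) * yp2))
    + (m2 * sK1^2 * (cmod Y2)^2 - 2 * m2 * sK1 * sn * Re (cnj Y2 * ym1) - l2 * sK1^2 * (cmod Y1)^2 + 2 * l2 * sK1 * sn1 * Re (cnj Y1 * yp2))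
    - (m2 * sK^2 * (cmod Y1)^2 - 2 * m2 * sK * sn * Re (cnj Y1 * ym0) - l2 * sK^2 * (cmod Y0)^2 + 2 * l2 * sK * sn1 * Re (cnj Y0 * yp0))"
  unfolding cmod_power2 by (simp add: power2_eq_square algebra_simps)

context dq begin

abbreviation "sg k \<equiv> sqrt (w k)"

definition "Dd n k s = mu^2 * (cmod (complex_of_real (sg (Suc k)) * y s (Suc k) n - complex_of_real (sg n) * y s k (n - 1)))^2
   + lam^2 * (cmod (complex_of_real (sg k) * y s (k - 1) n - complex_of_real (sg (Suc n)) * y s k (Suc n)))^2"

definition "bnd n K s = mu^2 * (sg K)^2 * (cmod (y s K n))^2 - 2 * mu^2 * sg K * sg n * Re (cnj (y s K n) * y s (K - 1) (n - 1))
   - lam^2 * (sg K)^2 * (cmod (y s (K - 1) n))^2 + 2 * lam^2 * sg K * sg (Suc n) * Re (cnj (y s (K - 1) n) * y s K (Suc n))"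

lemma sg2: "(sg k)^2 = w k" using w_nonneg by simp

lemma Kc_expand: "Kc x s k n = complex_of_real (mu^2 * sg k * sg n) * y s (k - 1) (n - 1) + complex_of_real (lam^2 * sg (Suc k) * sg (Suc n)) * y s (Suc k) (Suc n)"
  unfolding Kc_def ..

lemma fin_id:
  "(\<Sum>k<K. Dd n k s) = mu^2 * w n * (\<Sum>k<K. (cmod (y s k (n - 1)))^2) + lam^2 * w (Suc n) * (\<Sum>k<K. (cmod (y s k (Suc n)))^2)
     + (\<Sum>k<K. aR r lam mu k * (cmod (y s k n))^2) - (\<Sum>k<K. 2 * Re (cnj (y s k n) * Kc x s k n)) + bnd n K s"
proof (induction K)
  case 0
  show ?case unfolding bnd_def by (simp add: omega0)
next
  case (Suc K)
  have st: "Dd n K s = mu^2 * (sg n)^2 * (cmod (y s K (n - 1)))^2 + lam^2 * (sg (Suc n))^2 * (cmod (y s K (Suc n)))^2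
      + (mu^2 * (sg K)^2 + lam^2 * (sg (Suc K))^2) * (cmod (y s K n))^2
      - 2 * Re (cnj (y s K n) * Kc x s K n) + bnd n (Suc K) s - bnd n K s"
    unfolding Dd_def bnd_def Kc_expand diff_Suc_1
    by (rule step_alg)
  show ?case unfolding sum.lessThan_Suc Suc.IH st sg2 aR_def by (simp add: algebra_simps)
qed

end

lemma icont: "continuous_on {0..1::real} f \<Longrightarrow> (f has_integral integral {0..1} f) {0..1}"
  for f :: "real \<Rightarrow> 'a::euclidean_space"
  by (rule integrable_integral) (rule integrable_continuous_real)

context dq begin

definition "IYm m k = integral {0..1} (\<lambda>s. (cmod (y s k m))^2)"
definition "IR n k = integral {0..1} (\<lambda>s. 2 * Re (cnj (y s k n) * Kc x s k n))"
definition "IB n K = integral {0..1} (bnd n K)"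
definition "ID n k = integral {0..1} (Dd n k)"
definition "IZ m = integral {0..1} (Z m)"

lemma cY: "continuous_on {0..1} (\<lambda>s. (cmod (y s k m))^2)" by (intro continuous_intros ycont)
lemma hY: "((\<lambda>s. (cmod (y s k m))^2) has_integral IYm m k) {0..1}" unfolding IYm_def by (rule icont[OF cY])
lemma hR: "((\<lambda>s. 2 * Re (cnj (y s k n) * Kc x s k n)) has_integral IR n k) {0..1}"
  unfolding IR_def by (intro icont continuous_intros ycont Kc_cont xb)
lemma hB: "(bnd n K has_integral IB n K) {0..1}"
  unfolding IB_def bnd_def by (intro icont continuous_intros ycont)
lemma cD: "continuous_on {0..1} (Dd n k)" unfolding Dd_def by (intro continuous_intros ycont)
lemma hD: "(Dd n k has_integral ID n k) {0..1}" unfolding ID_def by (rule icont[OF cD])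
lemma hZ: "(Z m has_integral IZ m) {0..1}" unfolding IZ_def by (rule icont[OF Zcont])

lemma int_id:
  "(\<Sum>k<K. ID n k) = mu^2 * w n * (\<Sum>k<K. IYm (n - 1) k) + lam^2 * w (Suc n) * (\<Sum>k<K. IYm (Suc n) k)
     + (\<Sum>k<K. aR r lam mu k * IYm n k) - (\<Sum>k<K. IR n k) + IB n K"
proof -
  have L: "((\<lambda>s. \<Sum>k<K. Dd n k s) has_integral (\<Sum>k<K. ID n k)) {0..1}"
    by (rule has_integral_sum) (auto intro: hD)
  have R: "((\<lambda>s. mu^2 * w n * (\<Sum>k<K. (cmod (y s k (n - 1)))^2) + lam^2 * w (Suc n) * (\<Sum>k<K. (cmod (y s k (Suc n)))^2)
     + (\<Sum>k<K. aR r lam mu k * (cmod (y s k n))^2) - (\<Sum>k<K. 2 * Re (cnj (y s k n) * Kc x s k n)) + bnd n K s)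
     has_integral (mu^2 * w n * (\<Sum>k<K. IYm (n - 1) k) + lam^2 * w (Suc n) * (\<Sum>k<K. IYm (Suc n) k)
     + (\<Sum>k<K. aR r lam mu k * IYm n k) - (\<Sum>k<K. IR n k) + IB n K)) {0..1}"
    by (intro has_integral_add has_integral_diff has_integral_mult_right has_integral_sum finite_lessThan hY hR hB)
  have "((\<lambda>s. \<Sum>k<K. Dd n k s) has_integral (mu^2 * w n * (\<Sum>k<K. IYm (n - 1) k) + lam^2 * w (Suc n) * (\<Sum>k<K. IYm (Suc n) k)
     + (\<Sum>k<K. aR r lam mu k * IYm n k) - (\<Sum>k<K. IR n k) + IB n K)) {0..1}"
    using R unfolding fin_id[symmetric] .
  then show ?thesis using L by (rule has_integral_unique[symmetric])
qed

lemma E3i: "- (aR r lam mu k + aR r lam mu n) * IYm n k + IR n k = (cmod (y 1 k n))^2 - (cmod (x k n))^2"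
proof -
  have "((\<lambda>s. - (aR r lam mu k + aR r lam mu n) * (cmod (y s k n))^2 + 2 * Re (cnj (y s k n) * Kc x s k n))
     has_integral (- (aR r lam mu k + aR r lam mu n) * IYm n k + IR n k)) {0..1}"
    by (intro has_integral_add has_integral_mult_right hY hR)
  then show ?thesis using E3[of 1 k n] by (simp add: has_integral_unique)
qed

lemma E2i: "- aR r lam mu n * IZ n + mu^2 * w n * IZ (n - 1) + lam^2 * w (Suc n) * IZ (Suc n) = Z n 1 - Z n 0"
proof -
  have "((\<lambda>s. - aR r lam mu n * Z n s + mu^2 * w n * Z (n - 1) s + lam^2 * w (Suc n) * Z (Suc n) s)
     has_integral (- aR r lam mu n * IZ n + mu^2 * w n * IZ (n - 1) + lam^2 * w (Suc n) * IZ (Suc n))) {0..1}"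
    by (intro has_integral_add has_integral_mult_right hZ)
  then show ?thesis using E2[of 1 n] by (simp add: has_integral_unique)
qed

lemma main_id:
  "(\<Sum>k<K. ID n k) = mu^2 * w n * (\<Sum>k<K. IYm (n - 1) k) + lam^2 * w (Suc n) * (\<Sum>k<K. IYm (Suc n) k)
     - aR r lam mu n * (\<Sum>k<K. IYm n k) - (\<Sum>k<K. (cmod (y 1 k n))^2 - (cmod (x k n))^2) + IB n K"
proof -
  have "(\<Sum>k<K. aR r lam mu k * IYm n k) - (\<Sum>k<K. IR n k) = - aR r lam mu n * (\<Sum>k<K. IYm n k) - (\<Sum>k<K. (cmod (y 1 k n))^2 - (cmod (x k n))^2)"
  proof -
    have "aR r lam mu k * IYm n k - IR n k = - aR r lam mu n * IYm n k - ((cmod (y 1 k n))^2 - (cmod (x k n))^2)" for k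
      using E3i[of k] by (simp add: algebra_simps)
    then have "(\<Sum>k<K. aR r lam mu k * IYm n k - IR n k) = (\<Sum>k<K. - aR r lam mu n * IYm n k - ((cmod (y 1 k n))^2 - (cmod (x k n))^2))"
      by simp
    then show ?thesis by (simp add: sum_subtractf sum_distrib_left)
  qed
  then show ?thesis unfolding int_id by simp
qed

end

lemma cross_bound:
  fixes u v :: complex and a b :: real
  assumes "0 \<le> a" "0 \<le> b"
  shows "\<bar>2 * a * b * Re (cnj u * v)\<bar> \<le> a^2 * (cmod u)^2 + b^2 * (cmod v)^2"
proof -
  have "\<bar>Re (cnj u * v)\<bar> \<le> cmod (cnj u * v)" by (rule abs_Re_le_cmod)
  also have "\<dots> = cmod u * cmod v" by (simp add: norm_mult)
  finally have r: "\<bar>Re (cnj u * v)\<bar> \<le> cmod u * cmod v" .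
  have "\<bar>2 * a * b * Re (cnj u * v)\<bar> = 2 * a * b * \<bar>Re (cnj u * v)\<bar>" using assms by (simp add: abs_mult)
  also have "\<dots> \<le> 2 * a * b * (cmod u * cmod v)" by (rule mult_left_mono[OF r]) (use assms in simp)
  also have "\<dots> \<le> a^2 * (cmod u)^2 + b^2 * (cmod v)^2"
  proof -
    have "0 \<le> (a * cmod u - b * cmod v)^2" by simp
    then show ?thesis by (simp add: power2_diff power_mult_distrib algebra_simps)
  qed
  finally show ?thesis .
qed

lemma amgm_re:
  fixes Y H :: complex and a :: real
  assumes a: "0 < a"
  shows "2 * Re (cnj Y * H) \<le> (a / 2) * (cmod Y)^2 + (2 / a) * (cmod H)^2"
proof -
  have "Re (cnj Y * H) \<le> cmod (cnj Y * H)" by (rule complex_Re_le_cmod)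
  also have "\<dots> = cmod Y * cmod H" by (simp add: norm_mult)
  finally have r: "2 * Re (cnj Y * H) \<le> 2 * (cmod Y * cmod H)" by simp
  have "0 \<le> (a * cmod Y - 2 * cmod H)^2 / (2 * a)" using a by simp
  also have "(a * cmod Y - 2 * cmod H)^2 / (2 * a) = (a / 2) * (cmod Y)^2 + (2 / a) * (cmod H)^2 - 2 * (cmod Y * cmod H)"
    using a by (simp add: power2_diff power_mult_distrib field_simps power2_eq_square)
  finally show ?thesis using r by linarith
qed

lemma cm4: "(cmod ((complex_of_real a)^2))^2 = a^4"
proof -
  have "cmod ((complex_of_real a)^2) = a^2" by (simp add: norm_power)
  then show ?thesis by (simp add: power_mult[symmetric])
qed

context dq begin

lemma y0: "y 0 k m = x k m" by (rule T0_entry[OF xb])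

lemma IY_nonneg: "0 \<le> IYm m k"
  by (rule has_integral_nonneg[OF hY]) simp

lemma psum_int: "((\<lambda>s. \<Sum>k<K. (cmod (y s k m))^2) has_integral (\<Sum>k<K. IYm m k)) {0..1}"
  by (rule has_integral_sum) (auto intro: hY)

lemma psum_le_Z: "0 \<le> s \<Longrightarrow> (\<Sum>k<K. (cmod (y s k m))^2) \<le> Z m s"
  using sum_le_suminf[of "\<lambda>k. (cmod (y s k m))^2" "{..<K}"] Zsum[of s m]
  by (auto simp: sums_iff)

lemma SY_le: "(\<Sum>k<K. IYm m k) \<le> IZ m"
  by (rule has_integral_le[OF psum_int hZ]) (auto intro: psum_le_Z)

lemma SY_lim: "(\<lambda>K. \<Sum>k<K. IYm m k) \<longlonglongrightarrow> IZ m"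
proof -
  have "(\<lambda>K. integral {0..1} (\<lambda>s. \<Sum>k<K. (cmod (y s k m))^2)) \<longlonglongrightarrow> integral {0..1} (Z m)"
  proof (rule dominated_convergence(2))
    show "(\<lambda>s. \<Sum>k<K. (cmod (y s k m))^2) integrable_on {0..1}" for K using psum_int by blast
    show "Z m integrable_on {0..1}" using hZ by blast
    show "norm (\<Sum>k<K. (cmod (y s k m))^2) \<le> Z m s" if "s \<in> {0..1}" for K s
      using psum_le_Z[where s=s and K=K and m=m] that by (simp add: sum_nonneg)
    show "(\<lambda>K. \<Sum>k<K. (cmod (y s k m))^2) \<longlonglongrightarrow> Z m s" if "s \<in> {0..1}" for s
      using Zsum[of s m] that by (simp add: sums_def)
  qed
  moreover have "integral {0..1} (\<lambda>s. \<Sum>k<K. (cmod (y s k m))^2) = (\<Sum>k<K. IYm m k)" for K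
    using psum_int by (rule integral_unique)
  ultimately show ?thesis unfolding IZ_def by simp
qed

lemma IY_summable: "summable (IYm m)"
  by (rule summableI_nonneg_bounded[OF IY_nonneg SY_le])

lemma IY_zero: "(\<lambda>k. IYm m k) \<longlonglongrightarrow> 0"
  by (rule summable_LIMSEQ_zero[OF IY_summable])

lemma aR_pos: "0 < aR r lam mu k"
  unfolding aR_def using w_pos[of "Suc k"] w_nonneg[of k] lam by (simp add: add_pos_nonneg)

lemma Kc_sq: "(cmod (Kc x s k n))^2 \<le> 2 * mu^4 * w k * w n * (cmod (y s (k - 1) (n - 1)))^2 + 2 * lam^4 * w (Suc k) * w (Suc n) * (cmod (y s (Suc k) (Suc n)))^2"
proof -
  have "(cmod (Kc x s k n))^2 \<le> 2 * (cmod (complex_of_real (mu^2 * sg k * sg n) * y s (k - 1) (n - 1)))^2 + 2 * (cmod (complex_of_real (lam^2 * sg (Suc k) * sg (Suc n)) * y s (Suc k) (Suc n)))^2"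
    unfolding Kc_expand by (rule cmod_sum_sq)
  also have "\<dots> = 2 * mu^4 * w k * w n * (cmod (y s (k - 1) (n - 1)))^2 + 2 * lam^4 * w (Suc k) * w (Suc n) * (cmod (y s (Suc k) (Suc n)))^2"
    by (simp add: norm_mult power_mult_distrib sg2 abs_mult cm4)
  finally show ?thesis .
qed

lemma IR_bound: "IR n k \<le> (aR r lam mu k / 2) * IYm n k + 4 * mu^2 * w n * IYm (n - 1) (k - 1) + 4 * lam^2 * w (Suc n) * IYm (Suc n) (Suc k)"
proof -
  define a where "a = aR r lam mu k"
  have a: "0 < a" unfolding a_def by (rule aR_pos)
  have am: "mu^2 * w k \<le> a" and al: "lam^2 * w (Suc k) \<le> a" unfolding a_def aR_def
    using w_nonneg[of k] w_nonneg[of "Suc k"] by auto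
  have pt: "2 * Re (cnj (y s k n) * Kc x s k n) \<le> (a / 2) * (cmod (y s k n))^2 + 4 * mu^2 * w n * (cmod (y s (k - 1) (n - 1)))^2 + 4 * lam^2 * w (Suc n) * (cmod (y s (Suc k) (Suc n)))^2" for s
  proof -
    have "2 * Re (cnj (y s k n) * Kc x s k n) \<le> (a / 2) * (cmod (y s k n))^2 + (2 / a) * (cmod (Kc x s k n))^2"
      by (rule amgm_re[OF a])
    also have "(2 / a) * (cmod (Kc x s k n))^2 \<le> (2 / a) * (2 * mu^4 * w k * w n * (cmod (y s (k - 1) (n - 1)))^2 + 2 * lam^4 * w (Suc k) * w (Suc n) * (cmod (y s (Suc k) (Suc n)))^2)"
      by (rule mult_left_mono[OF Kc_sq]) (use a in simp)
    also have "\<dots> = 4 * (mu^2 * w k / a) * (mu^2 * w n * (cmod (y s (k - 1) (n - 1)))^2) + 4 * (lam^2 * w (Suc k) / a) * (lam^2 * w (Suc n) * (cmod (y s (Suc k) (Suc n)))^2)"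
      using a by (simp add: field_simps power2_eq_square power4_eq_xxxx)
    also have "\<dots> \<le> 4 * 1 * (mu^2 * w n * (cmod (y s (k - 1) (n - 1)))^2) + 4 * 1 * (lam^2 * w (Suc n) * (cmod (y s (Suc k) (Suc n)))^2)"
      using am al a w_nonneg[of n] w_nonneg[of "Suc n"]
      by (intro add_mono mult_right_mono mult_left_mono) (auto simp: divide_le_eq_1)
    finally show ?thesis by (simp add: algebra_simps)
  qed
  have "((\<lambda>s. (a / 2) * (cmod (y s k n))^2 + 4 * mu^2 * w n * (cmod (y s (k - 1) (n - 1)))^2 + 4 * lam^2 * w (Suc n) * (cmod (y s (Suc k) (Suc n)))^2)
      has_integral ((a / 2) * IYm n k + 4 * mu^2 * w n * IYm (n - 1) (k - 1) + 4 * lam^2 * w (Suc n) * IYm (Suc n) (Suc k))) {0..1}"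
    by (intro has_integral_add has_integral_mult_right hY)
  then show ?thesis unfolding a_def[symmetric] by (rule has_integral_le[OF hR]) (rule pt)
qed

end

context dq begin

lemma Z0_psum: "(\<Sum>k<K. (cmod (x k n))^2) \<le> Z n 0"
  using psum_le_Z[where s=0 and K=K and m=n] by (simp add: y0)

lemma IY_le_IZ: "IYm m k \<le> IZ m"
  using SY_le[of m "Suc k"] IY_nonneg[of m] sum_nonneg[of "{..<k}" "IYm m"]
  by (simp add: sum.lessThan_Suc IY_nonneg)

lemma aIY_bound: "(aR r lam mu k / 2) * IYm n k \<le> 4 * mu^2 * w n * IYm (n - 1) (k - 1) + 4 * lam^2 * w (Suc n) * IYm (Suc n) (Suc k) + (cmod (x k n))^2"
proof -
  have "(aR r lam mu k + aR r lam mu n) * IYm n k = IR n k - (cmod (y 1 k n))^2 + (cmod (x k n))^2"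
    using E3i[of k n] by (simp add: algebra_simps)
  also have "\<dots> \<le> IR n k + (cmod (x k n))^2" by simp
  finally have a: "(aR r lam mu k + aR r lam mu n) * IYm n k \<le> IR n k + (cmod (x k n))^2" .
  have "0 \<le> aR r lam mu n * IYm n k" using aR_pos[of n] IY_nonneg[of n k] by simp
  then show ?thesis using a IR_bound[of n k] by (simp add: algebra_simps)
qed

lemma aIY_summable: "summable (\<lambda>k. aR r lam mu k * IYm n k)"
proof -
  define C where "C = 4 * mu^2 * w n * (2 * IZ (n - 1)) + 4 * lam^2 * w (Suc n) * IZ (Suc n) + Z n 0"
  have s1: "(\<Sum>k<K. IYm (n - 1) (k - 1)) \<le> 2 * IZ (n - 1)" for K
  proof (cases K)
    case 0 then show ?thesis using IY_le_IZ[of "n - 1" 0] IY_nonneg[of "n - 1" 0] by simp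
  next
    case (Suc K')
    have "(\<Sum>k<K. IYm (n - 1) (k - 1)) = IYm (n - 1) 0 + (\<Sum>k<K'. IYm (n - 1) k)"
      unfolding Suc sum.lessThan_Suc_shift by simp
    also have "\<dots> \<le> IZ (n - 1) + IZ (n - 1)" by (intro add_mono IY_le_IZ SY_le)
    finally show ?thesis by simp
  qed
  have s2: "(\<Sum>k<K. IYm (Suc n) (Suc k)) \<le> IZ (Suc n)" for K
  proof -
    have "(\<Sum>k<K. IYm (Suc n) (Suc k)) \<le> IYm (Suc n) 0 + (\<Sum>k<K. IYm (Suc n) (Suc k))" using IY_nonneg by simp
    also have "\<dots> = (\<Sum>k<Suc K. IYm (Suc n) k)" unfolding sum.lessThan_Suc_shift ..
    also have "\<dots> \<le> IZ (Suc n)" by (rule SY_le)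
    finally show ?thesis .
  qed
  have bnd: "(\<Sum>k<K. (aR r lam mu k / 2) * IYm n k) \<le> C" for K
  proof -
    have "(\<Sum>k<K. (aR r lam mu k / 2) * IYm n k) \<le> (\<Sum>k<K. 4 * mu^2 * w n * IYm (n - 1) (k - 1) + 4 * lam^2 * w (Suc n) * IYm (Suc n) (Suc k) + (cmod (x k n))^2)"
      by (rule sum_mono) (rule aIY_bound)
    also have "\<dots> = 4 * mu^2 * w n * (\<Sum>k<K. IYm (n - 1) (k - 1)) + 4 * lam^2 * w (Suc n) * (\<Sum>k<K. IYm (Suc n) (Suc k)) + (\<Sum>k<K. (cmod (x k n))^2)"
      by (simp add: sum.distrib sum_distrib_left)
    also have "\<dots> \<le> C" unfolding C_def
      using w_nonneg[of n] w_nonneg[of "Suc n"]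
      by (intro add_mono mult_left_mono s1 s2 Z0_psum) auto
    finally show ?thesis .
  qed
  have "summable (\<lambda>k. (aR r lam mu k / 2) * IYm n k)"
  proof (rule summableI_nonneg_bounded[OF _ bnd])
    fix k
    have "0 \<le> aR r lam mu k" using aR_pos[of k] by simp
    then show "0 \<le> aR r lam mu k / 2 * IYm n k" using IY_nonneg[of n k] by simp
  qed
  then have "summable (\<lambda>k. 2 * ((aR r lam mu k / 2) * IYm n k))" by (rule summable_mult)
  then show ?thesis by simp
qed

lemma bnd_pt: "\<bar>bnd n (Suc K) s\<bar> \<le> 2 * mu^2 * w (Suc K) * (cmod (y s (Suc K) n))^2 + mu^2 * w n * (cmod (y s K (n - 1)))^2
   + 2 * lam^2 * w (Suc K) * (cmod (y s K n))^2 + lam^2 * w (Suc n) * (cmod (y s (Suc K) (Suc n)))^2"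
proof -
  have c1: "\<bar>2 * sg (Suc K) * sg n * Re (cnj (y s (Suc K) n) * y s K (n - 1))\<bar> \<le> w (Suc K) * (cmod (y s (Suc K) n))^2 + w n * (cmod (y s K (n - 1)))^2"
    using cross_bound[of "sg (Suc K)" "sg n" "y s (Suc K) n" "y s K (n - 1)"] by (simp add: sg2 w_nonneg)
  have c2: "\<bar>2 * sg (Suc K) * sg (Suc n) * Re (cnj (y s K n) * y s (Suc K) (Suc n))\<bar> \<le> w (Suc K) * (cmod (y s K n))^2 + w (Suc n) * (cmod (y s (Suc K) (Suc n)))^2"
    using cross_bound[of "sg (Suc K)" "sg (Suc n)" "y s K n" "y s (Suc K) (Suc n)"] by (simp add: sg2 w_nonneg)
  define A where "A = 2 * sg (Suc K) * sg n * Re (cnj (y s (Suc K) n) * y s K (n - 1))"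
  define B where "B = 2 * sg (Suc K) * sg (Suc n) * Re (cnj (y s K n) * y s (Suc K) (Suc n))"
  have e: "bnd n (Suc K) s = mu^2 * w (Suc K) * (cmod (y s (Suc K) n))^2 - mu^2 * A - lam^2 * w (Suc K) * (cmod (y s K n))^2 + lam^2 * B"
    unfolding bnd_def A_def B_def sg2 by (simp add: algebra_simps)
  have m1: "\<bar>mu^2 * A\<bar> \<le> mu^2 * (w (Suc K) * (cmod (y s (Suc K) n))^2 + w n * (cmod (y s K (n - 1)))^2)"
    unfolding abs_mult power2_abs abs_power2 using c1 unfolding A_def by (intro mult_left_mono) auto
  have m2: "\<bar>lam^2 * B\<bar> \<le> lam^2 * (w (Suc K) * (cmod (y s K n))^2 + w (Suc n) * (cmod (y s (Suc K) (Suc n)))^2)"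
    unfolding abs_mult power2_abs abs_power2 using c2 unfolding B_def by (intro mult_left_mono) auto
  have p1: "0 \<le> mu^2 * w (Suc K) * (cmod (y s (Suc K) n))^2" "0 \<le> lam^2 * w (Suc K) * (cmod (y s K n))^2"
    using w_nonneg by auto
  show ?thesis unfolding e using m1 m2 p1 by (simp add: abs_le_iff algebra_simps)
qed

end

context dq begin

lemma IB_lim: "(\<lambda>K. IB n (Suc K)) \<longlonglongrightarrow> 0"
proof -
  define AY where "AY k = aR r lam mu k * IYm n k" for k
  have AY0: "AY \<longlonglongrightarrow> 0" unfolding AY_def by (rule summable_LIMSEQ_zero[OF aIY_summable])
  define g where "g K = 2 * mu^2 * w (Suc K) * IYm n (Suc K) + mu^2 * w n * IYm (n - 1) K
     + 2 * lam^2 * w (Suc K) * IYm n K + lam^2 * w (Suc n) * IYm (Suc n) (Suc K)" for K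
  have IBb: "norm (IB n (Suc K)) \<le> g K" for K
  proof -
    have R: "((\<lambda>s. 2 * mu^2 * w (Suc K) * (cmod (y s (Suc K) n))^2 + mu^2 * w n * (cmod (y s K (n - 1)))^2
      + 2 * lam^2 * w (Suc K) * (cmod (y s K n))^2 + lam^2 * w (Suc n) * (cmod (y s (Suc K) (Suc n)))^2) has_integral g K) {0..1}"
      unfolding g_def by (intro has_integral_add has_integral_mult_right hY)
    have "IB n (Suc K) \<le> g K"
      by (rule has_integral_le[OF hB R]) (use bnd_pt in \<open>auto simp: abs_le_iff\<close>)
    moreover have "- IB n (Suc K) \<le> g K"
      by (rule has_integral_le[OF has_integral_neg[OF hB] R]) (use bnd_pt in \<open>auto simp: abs_le_iff\<close>)
    ultimately show ?thesis by simp
  qed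
  have g0: "g \<longlonglongrightarrow> 0"
  proof -
    define h where "h K = 2 * AY (Suc K) + mu^2 * w n * IYm (n - 1) K + 2 * AY K + lam^2 * w (Suc n) * IYm (Suc n) (Suc K)" for K
    have "h \<longlonglongrightarrow> 2 * 0 + mu^2 * w n * 0 + 2 * 0 + lam^2 * w (Suc n) * 0"
      unfolding h_def
      by (intro tendsto_intros LIMSEQ_Suc[OF AY0] AY0 IY_zero LIMSEQ_Suc[OF IY_zero])
    then have h0: "h \<longlonglongrightarrow> 0" by simp
    have "norm (g K) \<le> h K" for K
    proof -
      have gn: "0 \<le> g K" unfolding g_def using w_nonneg IY_nonneg
        by (intro add_nonneg_nonneg mult_nonneg_nonneg) auto
      have a1: "mu^2 * w (Suc K) * IYm n (Suc K) \<le> AY (Suc K)" unfolding AY_def aR_def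
        using IY_nonneg[of n "Suc K"] w_nonneg[of "Suc (Suc K)"] lam
        by (intro mult_right_mono) auto
      have a2: "lam^2 * w (Suc K) * IYm n K \<le> AY K" unfolding AY_def aR_def
        using IY_nonneg[of n K] w_nonneg[of K] mu
        by (intro mult_right_mono) auto
      show ?thesis using gn a1 a2 unfolding g_def h_def by simp
    qed
    then show ?thesis by (intro Lim_null_comparison[OF always_eventually h0]) blast
  qed
  show ?thesis by (rule Lim_null_comparison[OF always_eventually g0]) (use IBb in blast)
qed

lemma Dd_nonneg: "0 \<le> Dd n k s" unfolding Dd_def by simp

lemma ID_nonneg: "0 \<le> ID n k" by (rule has_integral_nonneg[OF hD]) (simp add: Dd_nonneg)

lemma ID_zero: "ID n k = 0"
proof -
  define S where "S K = (\<Sum>k<Suc K. ID n k)" for K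
  have lim: "S \<longlonglongrightarrow> mu^2 * w n * IZ (n - 1) + lam^2 * w (Suc n) * IZ (Suc n) - aR r lam mu n * IZ n - (Z n 1 - Z n 0) + 0"
  proof -
    have d: "(\<lambda>K. \<Sum>k<K. (cmod (y 1 k n))^2 - (cmod (x k n))^2) \<longlonglongrightarrow> Z n 1 - Z n 0"
    proof -
      have "(\<lambda>k. (cmod (y 1 k n))^2 - (cmod (x k n))^2) sums (Z n 1 - Z n 0)"
        using sums_diff[OF Zsum[of 1 n] Zsum[of 0 n]] by (simp add: y0)
      then show ?thesis by (simp add: sums_def)
    qed
    show ?thesis unfolding S_def main_id
      by (intro tendsto_intros LIMSEQ_Suc[OF SY_lim] LIMSEQ_Suc[OF d] IB_lim)
  qed
  then have lim0: "S \<longlonglongrightarrow> 0" using E2i[of n] by (simp add: algebra_simps)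
  have inc: "incseq S" unfolding S_def
    by (rule incseq_SucI) (simp add: ID_nonneg)
  have "S k \<le> 0" using incseq_le[OF inc lim0] by simp
  moreover have "ID n k \<le> S k" unfolding S_def
    using sum_nonneg[of "{..<k}" "ID n"] ID_nonneg by (simp add: sum.lessThan_Suc)
  ultimately show ?thesis using ID_nonneg[of n k] by simp
qed

lemma Dd0: "Dd n k 0 = 0"
proof (rule has_integral_0_cbox_imp_0[of 0 1 "Dd n k" 0])
  show "continuous_on (cbox (0::real) 1) (Dd n k)" using cD by simp
  show "0 \<le> Dd n k s" if "s \<in> box (0::real) 1" for s by (rule Dd_nonneg)
  show "(Dd n k has_integral 0) (cbox (0::real) 1)" using hD[of n k] ID_zero by simp
  show "box 0 (1::real) \<noteq> {}" by simp
  show "(0::real) \<in> cbox 0 1" by simp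
qed

lemma rels:
  "complex_of_real (sg (Suc k)) * x (Suc k) n = complex_of_real (sg n) * x k (n - 1)"
  "complex_of_real (sg k) * x (k - 1) n = complex_of_real (sg (Suc n)) * x k (Suc n)"
proof -
  have "mu^2 * (cmod (complex_of_real (sg (Suc k)) * x (Suc k) n - complex_of_real (sg n) * x k (n - 1)))^2
   + lam^2 * (cmod (complex_of_real (sg k) * x (k - 1) n - complex_of_real (sg (Suc n)) * x k (Suc n)))^2 = 0"
    using Dd0[of n k] unfolding Dd_def y0 .
  moreover have "0 < mu^2" "0 < lam^2" using mu lam by auto
  ultimately have "(cmod (complex_of_real (sg (Suc k)) * x (Suc k) n - complex_of_real (sg n) * x k (n - 1)))^2 = 0"
    "(cmod (complex_of_real (sg k) * x (k - 1) n - complex_of_real (sg (Suc n)) * x k (Suc n)))^2 = 0"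
    by (smt (verit) mult_pos_pos zero_le_power2 mult_nonneg_nonneg)+
  then show "complex_of_real (sg (Suc k)) * x (Suc k) n = complex_of_real (sg n) * x k (n - 1)"
    "complex_of_real (sg k) * x (k - 1) n = complex_of_real (sg (Suc n)) * x k (Suc n)"
    by auto
qed

lemma x_scalar: "x = (\<lambda>i j. x 0 0 * idm i j)"
proof -
  have sgp: "sg (Suc k) \<noteq> 0" for k using w_pos[of "Suc k"] by simp
  have col0: "x (Suc k) 0 = 0" for k
    using rels(1)[of k 0] sgp[of k] by (simp add: omega0)
  have row0: "x 0 (Suc j) = 0" for j
    using rels(2)[of 0 j] sgp[of j] by (simp add: omega0)
  have step: "x (Suc i) (Suc j) = complex_of_real (sg (Suc i) / sg (Suc j)) * x i j" for i j
    using rels(2)[of "Suc i" j] sgp[of j] by (simp add: field_simps)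
  have "\<forall>j. x i j = x 0 0 * idm i j" for i
  proof (induction i)
    case 0
    show ?case
    proof
      fix j show "x 0 j = x 0 0 * idm 0 j" by (cases j) (auto simp: idm_def row0)
    qed
  next
    case (Suc i)
    show ?case
    proof
      fix j show "x (Suc i) j = x 0 0 * idm (Suc i) j"
      proof (cases j)
        case 0 then show ?thesis by (simp add: col0 idm_def)
      next
        case (Suc j')
        have "x (Suc i) j = complex_of_real (sg (Suc i) / sg (Suc j')) * (x 0 0 * idm i j')"
          unfolding Suc step using Suc.IH by simp
        then show ?thesis unfolding Suc using sgp[of i] by (auto simp: idm_def)
      qed
    qed
  qed
  then show ?thesis by (intro ext) blast
qed

end

context qs begin

lemma dec_scalars: "dec_free T \<subseteq> scalars"
proof
  fix x assume "x \<in> dec_free T"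
  then have xb: "bdd_op x" and xd: "\<And>t. 0 \<le> t \<Longrightarrow> T t (mmult (adj x) x) = mmult (T t (adj x)) (T t x)"
    unfolding dec_free_def by auto
  interpret dq r lam mu zp zm T x by unfold_locales (use xb xd in auto)
  show "x \<in> scalars" unfolding scalars_def using x_scalar by blast
qed

end

theorem proposition3p3:
  fixes r lam mu zp zm :: real and T :: "real \<Rightarrow> mat \<Rightarrow> mat"
  assumes "0 < r" and "0 < lam" and "lam < mu"
    and "minimal_qds r lam mu zp zm T"
  shows "dec_free T = scalars \<and> fixed_pts T = scalars"
proof -
  interpret qs r lam mu zp zm T by unfold_locales (use assms in auto)
  show ?thesis using dec_scalars scalars_dec fixed_scalars scalars_fixed by blast
qed


end
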